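(* Let $E\subset\mathbb R^n$ be compact with nonempty interior (closure of a bounded Lipschitz domain), and $\{\mathcal T^{(r)}\}_r$, $\mathcal T^{(r)}=\{T_1,\dots,T_{M(r)}\}$, a $\{\mathscr P_r\Lambda^k(E)\}$-admissible integral $k$-mesh with constant $C$. Let $w^{(r)}_i>0$ for $i=1,\dots,M(r)$ and let $P^{(r)}$ be the weighted discrete least squares projector onto $\mathscr P_r\Lambda^k(E)$ associated with $\mathcal T^{(r)}$ and $w^{(r)}$. Then $$\|P^{(r)}\|_{\rm op}\le C\sqrt{\sum_{i=1}^{M(r)}\frac{w_i^{(r)}}{\min_jw_j^{(r)}}}\ \dim\mathscr P_r\Lambda^k,$$ and for every $\omega\in\mathscr D_0^k(E)$ $$\|\omega-P^{(r)}\omega\|_0\le\Big(1+C\sqrt{\sum_{i=1}^{M(r)}\frac{w_i^{(r)}}{\min_jw_j^{(r)}}}\ \dim\mathscr P_r\Lambda^k\Big)d_r(\omega,E),$$ where $d_r(\omega,E)=\inf\{\|\omega-\theta\|_0:\theta\in\mathscr P_r\Lambda^k(E)\}$.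
   Context: $\mathscr D_0^k(E)$: continuous maps $E\to\Lambda^k$ with norm $\|\omega\|_0=\sup_S\mathcal H^k(S)^{-1}|\int_S\omega|$ over oriented $\mathcal H^k$-measurable $k$-rectifiable $S\subset E$, $0<\mathcal H^k(S)<\infty$; $T_S(\omega)=\mathcal H^k(S)^{-1}\int_S\omega$. $\mathscr P_r\Lambda^k(E)$: $k$-forms with polynomial coefficients of degree $\le r$, $\dim=\binom nk\binom{n+r}r$. An integral $k$-mesh: finite sets $\mathcal T^{(r)}$ of averaging currents over sets $\{x+Ay:y\in\Omega\}\subset E$ ($A$ of rank $k$, $\Omega\subset\mathbb R^k$ of positive finite measure), oriented by normalized wedge of columns of $A$; admissible with constant $C$: $\limsup_r(\operatorname{Card}\mathcal T^{(r)})^{1/r}\le1$ and $\|\omega\|_0\le C\max_{T\in\mathcal T^{(r)}}|T(\omega)|$ for all $\omega\in\mathscr P_r\Lambda^k(E)$. $P^{(r)}\omega=\arg\min_{\theta\in\mathscr P_r\Lambda^k(E)}\sum_iw_i^{(r)}(T_i(\omega-\theta))^2$. $\|P\|_{\rm op}=\sup_{\|\omega\|_0=1}\|P\omega\|_0$. *)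

theory Defs
  imports "HOL-Analysis.Analysis"
begin

definition hcontent :: "nat \<Rightarrow> (real^'n) set \<Rightarrow> ennreal" where
  "hcontent k A = (if A = {} then 0 else ennreal (unit_ball_vol (real k) * (diameter A / 2) ^ k))"

definition hausdorff_outer :: "nat \<Rightarrow> (real^'n) set \<Rightarrow> ennreal" where
  "hausdorff_outer k S =
     (SUP \<delta>\<in>{0<..}. INF C\<in>{C :: nat \<Rightarrow> (real^'n) set.
          S \<subseteq> (\<Union>i. C i) \<and> (\<forall>i. bounded (C i) \<and> diameter (C i) \<le> \<delta>)}.
        (\<Sum>i. hcontent k (C i)))"

definition hk_measurable :: "nat \<Rightarrow> (real^'n) set \<Rightarrow> bool" where
  "hk_measurable k S \<longleftrightarrow>
     (\<forall>A. hausdorff_outer k A = hausdorff_outer k (A \<inter> S) + hausdorff_outer k (A - S))"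

definition hausdorff_measure :: "nat \<Rightarrow> (real^'n) measure" where
  "hausdorff_measure k = measure_of UNIV {S. hk_measurable k S} (hausdorff_outer k)"

text \<open>Countable union of Lipschitz images of subsets of R^k (realised as a k-dimensional
  linear subspace V of R^n), up to an H^k-null set.\<close>
definition k_rectifiable :: "nat \<Rightarrow> (real^'n) set \<Rightarrow> bool" where
  "k_rectifiable k S \<longleftrightarrow>
     (\<exists>(f :: nat \<Rightarrow> real^'n \<Rightarrow> real^'n) (A :: nat \<Rightarrow> (real^'n) set) V.
        subspace V \<and> dim V = k \<and>
        (\<forall>i. A i \<subseteq> V \<and> (\<exists>L. L-lipschitz_on (A i) (f i))) \<and>
        hausdorff_outer k (S - (\<Union>i. f i ` A i)) = 0)"

definition approx_tangent :: "nat \<Rightarrow> (real^'n) set \<Rightarrow> real^'n \<Rightarrow> (real^'n) set \<Rightarrow> bool" where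
  "approx_tangent k S x V \<longleftrightarrow> subspace V \<and> dim V = k \<and>
     (\<forall>\<phi> :: real^'n \<Rightarrow> real. continuous_on UNIV \<phi> \<and> (\<exists>R. \<forall>y. R < norm y \<longrightarrow> \<phi> y = 0) \<longrightarrow>
        ((\<lambda>t. (1 / t ^ k) * (LINT y:S|hausdorff_measure k. \<phi> ((1 / t) *\<^sub>R (y - x))))
           \<longlongrightarrow> (LINT y:V|hausdorff_measure k. \<phi> y)) (at_right 0))"

text \<open>An orientation of S: an H^k-measurable field u of orthonormal k-frames
  (u x 0, ..., u x (k-1)) spanning the approximate tangent space at H^k-a.e. x in S;
  it represents the unit simple k-vector field u x 0 wedge ... wedge u x (k-1).\<close>
definition orientation :: "nat \<Rightarrow> (real^'n) set \<Rightarrow> (real^'n \<Rightarrow> nat \<Rightarrow> real^'n) \<Rightarrow> bool" where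
  "orientation k S u \<longleftrightarrow>
     (\<forall>i<k. (\<lambda>x. u x i) \<in> borel_measurable (hausdorff_measure k)) \<and>
     (AE x in hausdorff_measure k. x \<in> S \<longrightarrow>
        (\<forall>i<k. \<forall>j<k. u x i \<bullet> u x j = (if i = j then 1 else 0)) \<and>
        approx_tangent k S x (span (u x ` {..<k})))"

definition oriented_rect :: "nat \<Rightarrow> (real^'n) set \<Rightarrow> (real^'n) set \<Rightarrow> (real^'n \<Rightarrow> nat \<Rightarrow> real^'n) \<Rightarrow> bool" where
  "oriented_rect k E S u \<longleftrightarrow> S \<subseteq> E \<and> hk_measurable k S \<and> k_rectifiable k S \<and>
     0 < hausdorff_outer k S \<and> hausdorff_outer k S < \<infinity> \<and> orientation k S u"

text \<open>A k-covector (element of Lambda^k) is an alternating k-linear form; we represent it as a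
  function of a sequence of vectors depending only on the first k entries.\<close>
type_synonym 'n covec = "(nat \<Rightarrow> real^('n::finite)) \<Rightarrow> real"
type_synonym 'n kform = "real^'n \<Rightarrow> 'n covec"

definition is_covector :: "nat \<Rightarrow> ('n::finite) covec \<Rightarrow> bool" where
  "is_covector k \<phi> \<longleftrightarrow>
     (\<forall>v w. (\<forall>i<k. v i = w i) \<longrightarrow> \<phi> v = \<phi> w) \<and>
     (\<forall>v. \<forall>i<k. linear (\<lambda>z. \<phi> (v(i := z)))) \<and>
     (\<forall>v. \<forall>i<k. \<forall>j<k. i \<noteq> j \<and> v i = v j \<longrightarrow> \<phi> v = 0)"

definition dform :: "nat \<Rightarrow> (real^'n) set \<Rightarrow> ('n::finite) kform \<Rightarrow> bool" where
  "dform k E \<omega> \<longleftrightarrow> (\<forall>x\<in>E. is_covector k (\<omega> x)) \<and> (\<forall>v. continuous_on E (\<lambda>x. \<omega> x v))"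

definition poly_fun :: "nat \<Rightarrow> (real^'n \<Rightarrow> real) \<Rightarrow> bool" where
  "poly_fun r f \<longleftrightarrow> (\<exists>c :: ('n \<Rightarrow> nat) \<Rightarrow> real. \<forall>x.
     f x = (\<Sum>\<alpha>\<in>{\<alpha> :: 'n \<Rightarrow> nat. sum \<alpha> UNIV \<le> r}. c \<alpha> * (\<Prod>i\<in>UNIV. (x $ i) ^ \<alpha> i)))"

definition pform :: "nat \<Rightarrow> nat \<Rightarrow> ('n::finite) kform \<Rightarrow> bool" where
  "pform r k \<theta> \<longleftrightarrow> (\<forall>x. is_covector k (\<theta> x)) \<and> (\<forall>v. poly_fun r (\<lambda>x. \<theta> x v))"

definition pdim :: "nat \<Rightarrow> nat \<Rightarrow> nat \<Rightarrow> nat" where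
  "pdim n k r = (n choose k) * ((n + r) choose r)"

definition avg_current :: "nat \<Rightarrow> (real^'n) set \<Rightarrow> (real^'n \<Rightarrow> nat \<Rightarrow> real^'n) \<Rightarrow> ('n::finite) kform \<Rightarrow> real" where
  "avg_current k S u \<omega> =
     (LINT x:S|hausdorff_measure k. \<omega> x (u x)) / enn2real (hausdorff_outer k S)"

definition norm0 :: "nat \<Rightarrow> (real^'n) set \<Rightarrow> ('n::finite) kform \<Rightarrow> real" where
  "norm0 k E \<omega> = Sup {\<bar>avg_current k S u \<omega>\<bar> | S u. oriented_rect k E S u}"

definition dist_poly :: "nat \<Rightarrow> nat \<Rightarrow> (real^'n) set \<Rightarrow> ('n::finite) kform \<Rightarrow> real" where
  "dist_poly r k E \<omega> = Inf {norm0 k E (\<omega> - \<theta>) | \<theta>. pform r k \<theta>}"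

definition lebesgue_k :: "nat \<Rightarrow> (nat \<Rightarrow> real) measure" where
  "lebesgue_k k = completion (Pi\<^sub>M {..<k} (\<lambda>_. lborel))"

text \<open>(S,u) is the averaging current over S = {x0 + A y : y \<in> \<Omega>} \<subseteq> E, A = (a 0 | ... | a (k-1))
  of rank k, \<Omega> of positive finite Lebesgue measure, oriented by the normalized wedge of the
  columns of A: u x 0 \<and> ... \<and> u x (k-1) is a positive multiple of a 0 \<and> ... \<and> a (k-1)
  (tested against all k-covectors).\<close>
definition mesh_current :: "nat \<Rightarrow> (real^'n) set \<Rightarrow> (real^'n) set \<Rightarrow> (real^'n \<Rightarrow> nat \<Rightarrow> real^'n) \<Rightarrow> bool" where
  "mesh_current k E S u \<longleftrightarrow> oriented_rect k E S u \<and>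
     (\<exists>x0 (a :: nat \<Rightarrow> real^'n) \<Omega>.
        dim (a ` {..<k}) = k \<and>
        \<Omega> \<in> sets (lebesgue_k k) \<and> 0 < emeasure (lebesgue_k k) \<Omega> \<and> emeasure (lebesgue_k k) \<Omega> < \<infinity> \<and>
        S = {x0 + (\<Sum>i<k. y i *\<^sub>R a i) | y. y \<in> \<Omega>} \<and>
        (\<forall>x\<in>S. \<exists>c>0. \<forall>\<phi>. is_covector k \<phi> \<longrightarrow> \<phi> (u x) = c * \<phi> a))"

definition admissible_mesh :: "nat \<Rightarrow> (real^'n) set \<Rightarrow>
    (nat \<Rightarrow> nat \<Rightarrow> (real^'n) set \<times> (real^'n \<Rightarrow> nat \<Rightarrow> real^'n)) \<Rightarrow> (nat \<Rightarrow> nat) \<Rightarrow> real \<Rightarrow> bool" where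
  "admissible_mesh k E T M C \<longleftrightarrow>
     (\<forall>r. 0 < M r \<and> (\<forall>i<M r. mesh_current k E (fst (T r i)) (snd (T r i)))) \<and>
     limsup (\<lambda>r. ereal (real (card ((\<lambda>i. avg_current k (fst (T r i)) (snd (T r i))) ` {..<M r}))
                          powr (1 / real r))) \<le> 1 \<and>
     (\<forall>r \<theta>. pform r k \<theta> \<longrightarrow>
        norm0 k E \<theta> \<le> C * Max ((\<lambda>i. \<bar>avg_current k (fst (T r i)) (snd (T r i)) \<theta>\<bar>) ` {..<M r}))"

definition is_lsq :: "nat \<Rightarrow> nat \<Rightarrow> (nat \<Rightarrow> (real^'n) set \<times> (real^'n \<Rightarrow> nat \<Rightarrow> real^'n)) \<Rightarrow> nat \<Rightarrow>
    (nat \<Rightarrow> real) \<Rightarrow> ('n::finite) kform \<Rightarrow> ('n::finite) kform \<Rightarrow> bool" where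
  "is_lsq r k T m w \<omega> p \<longleftrightarrow> pform r k p \<and>
     (\<forall>\<theta>. pform r k \<theta> \<longrightarrow>
        (\<Sum>i<m. w i * (avg_current k (fst (T i)) (snd (T i)) (\<omega> - p))\<^sup>2)
          \<le> (\<Sum>i<m. w i * (avg_current k (fst (T i)) (snd (T i)) (\<omega> - \<theta>))\<^sup>2))"

end

theory Submission
  imports Defs
begin


definition Hd :: "nat \<Rightarrow> real \<Rightarrow> (real^'n) set \<Rightarrow> ennreal" where
  "Hd k \<delta> S = (INF C\<in>{C :: nat \<Rightarrow> (real^'n) set.
          S \<subseteq> (\<Union>i. C i) \<and> (\<forall>i. bounded (C i) \<and> diameter (C i) \<le> \<delta>)}.
        (\<Sum>i. hcontent k (C i)))"

lemma H_Hd: "hausdorff_outer k S = (SUP \<delta>\<in>{0<..}. Hd k \<delta> S)"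
  unfolding hausdorff_outer_def Hd_def by simp

lemma Hd_le_cover:
  assumes "S \<subseteq> (\<Union>i. C i)" "\<And>i. bounded (C i)" "\<And>i. diameter (C i) \<le> \<delta>"
  shows "Hd k \<delta> S \<le> (\<Sum>i. hcontent k (C i))"
  unfolding Hd_def using assms by (intro INF_lower) auto

lemma Hd_mono: "A \<subseteq> B \<Longrightarrow> Hd k \<delta> A \<le> Hd k \<delta> B"
  unfolding Hd_def by (rule INF_superset_mono) auto

lemma Hd_anti: "\<delta> \<le> \<delta>' \<Longrightarrow> Hd k \<delta>' A \<le> Hd k \<delta> A"
  unfolding Hd_def by (rule INF_superset_mono) (auto intro: order_trans)

lemma Hd_le_H: "0 < \<delta> \<Longrightarrow> Hd k \<delta> A \<le> hausdorff_outer k A"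
  unfolding H_Hd by (rule SUP_upper) auto

lemma H_mono: "A \<subseteq> B \<Longrightarrow> hausdorff_outer k A \<le> hausdorff_outer k B"
  unfolding H_Hd by (intro SUP_mono) (auto intro: Hd_mono)

lemma Hd_empty: "0 \<le> \<delta> \<Longrightarrow> Hd k \<delta> {} = 0"
  using Hd_le_cover[of "{}" "\<lambda>_. {}" \<delta> k] by (simp add: hcontent_def)

lemma H_empty: "hausdorff_outer k {} = 0"
  unfolding H_Hd by (simp add: Hd_empty)

lemma Hd_countable_subadd:
  fixes A :: "nat \<Rightarrow> (real^'n) set"
  shows "Hd k \<delta> (\<Union>n. A n) \<le> (\<Sum>n. Hd k \<delta> (A n))"
proof (rule ennreal_le_epsilon)
  fix e :: real assume fin: "(\<Sum>n. Hd k \<delta> (A n)) < top" and e: "0 < e"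
  have fin1: "Hd k \<delta> (A n) < top" for n
    by (rule ennreal_suminf_lessD[OF fin])
  have "\<exists>C. (A n \<subseteq> (\<Union>i. C i) \<and> (\<forall>i. bounded (C i) \<and> diameter (C i) \<le> \<delta>)) \<and>
          (\<Sum>i. hcontent k (C i)) < Hd k \<delta> (A n) + ennreal (e / 2 ^ Suc n)" for n
  proof -
    have "Hd k \<delta> (A n) < Hd k \<delta> (A n) + ennreal (e / 2 ^ Suc n)"
      using fin1[of n] e by simp
    then show ?thesis unfolding Hd_def[of k \<delta> "A n"] INF_less_iff by auto
  qed
  then have "\<exists>C. \<forall>n. (A n \<subseteq> (\<Union>i. C n i) \<and> (\<forall>i. bounded (C n i) \<and> diameter (C n i) \<le> \<delta>)) \<and>
          (\<Sum>i. hcontent k (C n i)) < Hd k \<delta> (A n) + ennreal (e / 2 ^ Suc n)"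
    by (rule choice[OF allI])
  then obtain C where C0: "\<forall>n. (A n \<subseteq> (\<Union>i. C n i) \<and> (\<forall>i. bounded (C n i) \<and> diameter (C n i) \<le> \<delta>)) \<and>
          (\<Sum>i. hcontent k (C n i)) < Hd k \<delta> (A n) + ennreal (e / 2 ^ Suc n)"
    by (elim exE)
  then have C: "\<And>n. A n \<subseteq> (\<Union>i. C n i)" "\<And>n i. bounded (C n i)" "\<And>n i. diameter (C n i) \<le> \<delta>"
     "\<And>n. (\<Sum>i. hcontent k (C n i)) < Hd k \<delta> (A n) + ennreal (e / 2 ^ Suc n)"
    by auto
  define D where "D m = (case prod_decode m of (n, i) \<Rightarrow> C n i)" for m
  have "Hd k \<delta> (\<Union>n. A n) \<le> (\<Sum>m. hcontent k (D m))"
  proof (rule Hd_le_cover)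
    show "(\<Union>n. A n) \<subseteq> (\<Union>m. D m)"
    proof
      fix x assume "x \<in> (\<Union>n. A n)"
      then obtain n i where "x \<in> C n i" using C(1) by blast
      then have "x \<in> D (prod_encode (n, i))" by (simp add: D_def)
      then show "x \<in> (\<Union>m. D m)" by blast
    qed
  qed (auto simp: D_def C split: prod.splits)
  also have "(\<Sum>m. hcontent k (D m)) = (\<Sum>n. \<Sum>i. hcontent k (C n i))"
  proof -
    have "\<And>m. hcontent k (D m) = (\<lambda>(n,i). hcontent k (C n i)) (prod_decode m)"
      by (auto simp: D_def split: prod.splits)
    then have "(\<Sum>m. hcontent k (D m)) = (\<Sum>m. (\<lambda>(n,i). hcontent k (C n i)) (prod_decode m))"
      by simp
    also have "\<dots> = (\<Sum>n. \<Sum>i. hcontent k (C n i))"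
      by (rule suminf_ennreal_2dimen) simp
    finally show ?thesis .
  qed
  also have "\<dots> \<le> (\<Sum>n. Hd k \<delta> (A n) + ennreal (e / 2 ^ Suc n))"
    by (intro suminf_le) (use C(4) in \<open>auto intro: less_imp_le simp del: power_Suc\<close>)
  also have "\<dots> = (\<Sum>n. Hd k \<delta> (A n)) + (\<Sum>n. ennreal (e / 2 ^ Suc n))"
    by (rule suminf_add[symmetric]) auto
  also have "(\<Sum>n. ennreal (e / 2 ^ Suc n)) = ennreal e"
  proof -
    have s: "(\<lambda>n. e * (1/2::real)^Suc n) sums (e * 1)"
      by (intro sums_mult power_half_series)
    have "(\<Sum>n. ennreal (e / 2 ^ Suc n)) = ennreal (\<Sum>n. e / 2 ^ Suc n)"
      using s e by (intro suminf_ennreal2) (auto simp: sums_iff power_divide)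
    also have "(\<Sum>n. e / 2 ^ Suc n) = e" using s by (simp add: sums_iff power_divide)
    finally show ?thesis .
  qed
  finally show "Hd k \<delta> (\<Union>n. A n) \<le> (\<Sum>n. Hd k \<delta> (A n)) + ennreal e" .
qed

lemma H_countable_subadd:
  fixes A :: "nat \<Rightarrow> (real^'n) set"
  shows "hausdorff_outer k (\<Union>n. A n) \<le> (\<Sum>n. hausdorff_outer k (A n))"
  unfolding H_Hd[of k "\<Union>n. A n"]
proof (rule SUP_least)
  fix \<delta> :: real assume "\<delta> \<in> {0<..}"
  then have "Hd k \<delta> (A n) \<le> hausdorff_outer k (A n)" for n by (intro Hd_le_H) auto
  then show "Hd k \<delta> (\<Union>n. A n) \<le> (\<Sum>n. hausdorff_outer k (A n))"
  proof -
    have "(\<Sum>n. Hd k \<delta> (A n)) \<le> (\<Sum>n. hausdorff_outer k (A n))"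
      by (rule suminf_le) (use \<open>\<And>n. Hd k \<delta> (A n) \<le> hausdorff_outer k (A n)\<close> in auto)
    then show ?thesis using Hd_countable_subadd[of k \<delta> A] by (rule order_trans[rotated])
  qed
qed

lemma H_subadd:
  "hausdorff_outer k (A \<union> B) \<le> hausdorff_outer k A + hausdorff_outer k B"
proof -
  define F where "F n = (if n = 0 then A else if n = 1 then B else {})" for n :: nat
  have "A \<union> B = (\<Union>n. F n)" by (auto simp: F_def split: if_splits)
  then have "hausdorff_outer k (A \<union> B) \<le> (\<Sum>n. hausdorff_outer k (F n))"
    using H_countable_subadd by metis
  also have "(\<Sum>n. hausdorff_outer k (F n)) = (\<Sum>n\<in>{0,1}. hausdorff_outer k (F n))"
    by (rule suminf_finite) (auto simp: F_def H_empty)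
  finally show ?thesis by (simp add: F_def)
qed



lemma Hd_sep:
  assumes e: "0 < \<delta>" "\<delta> < e" and sep: "\<forall>x\<in>X. \<forall>y\<in>Y. e \<le> dist x y"
  shows "Hd k \<delta> X + Hd k \<delta> Y \<le> Hd k \<delta> (X \<union> Y)"
  unfolding Hd_def[of k \<delta> "X \<union> Y"]
proof (rule INF_greatest, clarify)
  fix C :: "nat \<Rightarrow> (real^'a) set"
  assume cov: "X \<union> Y \<subseteq> (\<Union>i. C i)" and bd: "\<forall>i. bounded (C i) \<and> diameter (C i) \<le> \<delta>"
  define C1 where "C1 i = (if C i \<inter> X = {} then {} else C i)" for i
  define C2 where "C2 i = (if C i \<inter> Y = {} then {} else C i)" for i
  have 1: "Hd k \<delta> X \<le> (\<Sum>i. hcontent k (C1 i))"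
  proof (rule Hd_le_cover)
    show "X \<subseteq> (\<Union>i. C1 i)"
    proof
      fix x assume "x \<in> X"
      then obtain i where "x \<in> C i" using cov by blast
      then show "x \<in> (\<Union>i. C1 i)" using \<open>x \<in> X\<close> by (auto simp: C1_def)
    qed
  qed (use bd e in \<open>auto simp: C1_def\<close>)
  have 2: "Hd k \<delta> Y \<le> (\<Sum>i. hcontent k (C2 i))"
  proof (rule Hd_le_cover)
    show "Y \<subseteq> (\<Union>i. C2 i)"
    proof
      fix x assume "x \<in> Y"
      then obtain i where "x \<in> C i" using cov by blast
      then show "x \<in> (\<Union>i. C2 i)" using \<open>x \<in> Y\<close> by (auto simp: C2_def)
    qed
  qed (use bd e in \<open>auto simp: C2_def\<close>)
  have 3: "hcontent k (C1 i) + hcontent k (C2 i) \<le> hcontent k (C i)" for i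
  proof (cases "C i \<inter> X = {} \<or> C i \<inter> Y = {}")
    case True then show ?thesis by (auto simp: C1_def C2_def hcontent_def)
  next
    case False
    then obtain x y where xy: "x \<in> C i" "x \<in> X" "y \<in> C i" "y \<in> Y" by blast
    then have "dist x y \<le> diameter (C i)" using bd by (intro diameter_bounded_bound) auto
    also have "\<dots> \<le> \<delta>" using bd by auto
    finally have "dist x y < e" using e by simp
    with sep xy show ?thesis by force
  qed
  have "Hd k \<delta> X + Hd k \<delta> Y \<le> (\<Sum>i. hcontent k (C1 i)) + (\<Sum>i. hcontent k (C2 i))"
    using 1 2 by (rule add_mono)
  also have "\<dots> = (\<Sum>i. hcontent k (C1 i) + hcontent k (C2 i))"
    by (rule suminf_add) auto
  also have "\<dots> \<le> (\<Sum>i. hcontent k (C i))"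
    by (rule suminf_le) (use 3 in auto)
  finally show "Hd k \<delta> X + Hd k \<delta> Y \<le> (\<Sum>i. hcontent k (C i))" .
qed

lemma H_sep:
  assumes e: "0 < e" and sep: "\<forall>x\<in>X. \<forall>y\<in>Y. e \<le> dist x y"
  shows "hausdorff_outer k X + hausdorff_outer k Y \<le> hausdorff_outer k (X \<union> Y)"
proof -
  have *: "Hd k \<delta>1 X + Hd k \<delta>2 Y \<le> hausdorff_outer k (X \<union> Y)" if "0 < \<delta>1" "0 < \<delta>2" for \<delta>1 \<delta>2
  proof -
    define \<delta> where "\<delta> = min (min \<delta>1 \<delta>2) (e/2)"
    have d: "0 < \<delta>" "\<delta> < e" "\<delta> \<le> \<delta>1" "\<delta> \<le> \<delta>2" using that e by (auto simp: \<delta>_def)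
    have "Hd k \<delta>1 X + Hd k \<delta>2 Y \<le> Hd k \<delta> X + Hd k \<delta> Y"
      using d by (intro add_mono Hd_anti)
    also have "\<dots> \<le> Hd k \<delta> (X \<union> Y)" using d sep by (intro Hd_sep) auto
    also have "\<dots> \<le> hausdorff_outer k (X \<union> Y)" using d by (intro Hd_le_H)
    finally show ?thesis .
  qed
  have "hausdorff_outer k X + hausdorff_outer k Y
      = (SUP \<delta>1\<in>{0<..}. Hd k \<delta>1 X + hausdorff_outer k Y)"
    unfolding H_Hd[of k X] by (rule ennreal_SUP_add_left[symmetric]) auto
  also have "\<dots> \<le> hausdorff_outer k (X \<union> Y)"
  proof (rule SUP_least)
    fix \<delta>1 :: real assume "\<delta>1 \<in> {0<..}"
    have "Hd k \<delta>1 X + hausdorff_outer k Y = (SUP \<delta>2\<in>{0<..}. Hd k \<delta>2 Y + Hd k \<delta>1 X)"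
      unfolding H_Hd[of k Y] by (subst ennreal_SUP_add_left) (auto simp: add.commute)
    also have "\<dots> \<le> hausdorff_outer k (X \<union> Y)"
    proof (rule SUP_least)
      fix \<delta>2 :: real assume "\<delta>2 \<in> {0<..}"
      then show "Hd k \<delta>2 Y + Hd k \<delta>1 X \<le> hausdorff_outer k (X \<union> Y)"
        using *[of \<delta>1 \<delta>2] \<open>\<delta>1 \<in> {0<..}\<close> by (simp add: add.commute)
    qed
    finally show "Hd k \<delta>1 X + hausdorff_outer k Y \<le> hausdorff_outer k (X \<union> Y)" .
  qed
  finally show ?thesis .
qed

lemma sum_even_odd_gen:
  fixes f :: "nat \<Rightarrow> 'b::comm_monoid_add"
  shows "(\<Sum>j<2*N. f j) = (\<Sum>i<N. f (2*i)) + (\<Sum>i<N. f (2*i+1))"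
  by (induction N) (auto simp: ac_simps)

lemma open_hk_measurable:
  fixes U :: "(real^'n) set"
  assumes "open U"
  shows "hk_measurable k U"
  unfolding hk_measurable_def
proof
  fix A :: "(real^'n) set"
  let ?H = "hausdorff_outer k"
  show "?H A = ?H (A \<inter> U) + ?H (A - U)"
  proof (rule antisym)
    show "?H A \<le> ?H (A \<inter> U) + ?H (A - U)"
      using H_subadd[of k "A \<inter> U" "A - U"] by (simp add: Int_Diff_Un)
  next
    show "?H (A \<inter> U) + ?H (A - U) \<le> ?H A"
    proof (cases "U = UNIV")
      case True then show ?thesis by (simp add: H_empty)
    next
      case notU: False
      show ?thesis
      proof (cases "?H A = top")
        case True then show ?thesis by simp
      next
        case finA: False
        define F where "F = - U"
        have F: "closed F" "F \<noteq> {}" using assms notU by (auto simp: F_def)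
        define d where "d x = infdist x F" for x
        define B where "B = A \<inter> U"
        define D where "D = A - U"
        define Aj where "Aj j = {x\<in>B. 1 / real (Suc j) \<le> d x}" for j
        define R where "R j = Aj (Suc j) - Aj j" for j
        have dpos: "0 < d x" if "x \<in> B" for x
          using that F unfolding d_def B_def F_def by (intro infdist_pos_not_in_closed) auto
        have dD: "d y = 0" if "y \<in> D" for y
          using that unfolding d_def D_def F_def by simp
        have sepd: "?H X + ?H Y \<le> ?H (X \<union> Y)"
          if "\<forall>x\<in>X. a \<le> d x" "\<forall>y\<in>Y. d y \<le> b" "b < a" for X Y a b
        proof (rule H_sep[of "a - b"])
          show "0 < a - b" using that by simp
          show "\<forall>x\<in>X. \<forall>y\<in>Y. a - b \<le> dist x y"
          proof (intro ballI)
            fix x y assume "x \<in> X" "y \<in> Y"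
            have "d x \<le> d y + dist x y" unfolding d_def by (rule infdist_triangle)
            then show "a - b \<le> dist x y" using that \<open>x \<in> X\<close> \<open>y \<in> Y\<close> by force
          qed
        qed
        have Aj_mono: "Aj a \<subseteq> Aj b" if "a \<le> b" for a b
        proof -
          have "1 / real (Suc b) \<le> 1 / real (Suc a)" using that by (simp add: frac_le)
          then show ?thesis unfolding Aj_def by auto
        qed
        have AjB: "Aj j \<subseteq> B" for j unfolding Aj_def by auto
        have BA: "B \<subseteq> A" unfolding B_def by auto
        have a_step: "?H (Aj j) + ?H D \<le> ?H A" for j
        proof -
          have "?H (Aj j) + ?H D \<le> ?H (Aj j \<union> D)"
            by (rule sepd[of _ "1 / real (Suc j)" _ 0]) (auto simp: Aj_def dD)
          also have "\<dots> \<le> ?H A" using AjB BA by (intro H_mono) (auto simp: D_def)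
          finally show ?thesis .
        qed
        have par: "(\<Sum>i<N. ?H (R (2*i+c))) \<le> ?H (\<Union>i<N. R (2*i+c))" for N c
        proof (induction N)
          case 0 then show ?case by simp
        next
          case (Suc N)
          have "(\<Sum>i<Suc N. ?H (R (2*i+c))) = (\<Sum>i<N. ?H (R (2*i+c))) + ?H (R (2*N+c))"
            by simp
          also have "\<dots> \<le> ?H (\<Union>i<N. R (2*i+c)) + ?H (R (2*N+c))"
            using Suc.IH by (rule add_right_mono)
          also have "\<dots> \<le> ?H ((\<Union>i<N. R (2*i+c)) \<union> R (2*N+c))"
          proof (cases "N = 0")
            case True then show ?thesis by (simp add: H_empty)
          next
            case False
            show ?thesis
            proof (rule sepd[of _ "1 / real (2*N+c)" _ "1 / real (Suc (2*N+c))"])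
              show "\<forall>x\<in>(\<Union>i<N. R (2*i+c)). 1 / real (2*N+c) \<le> d x"
              proof (intro ballI)
                fix x assume "x \<in> (\<Union>i<N. R (2*i+c))"
                then obtain i where i: "i < N" "x \<in> Aj (Suc (2*i+c))" by (auto simp: R_def)
                then have "1 / real (Suc (Suc (2*i+c))) \<le> d x" by (auto simp: Aj_def)
                moreover have "1 / real (2*N+c) \<le> 1 / real (Suc (Suc (2*i+c)))"
                  using i(1) by (intro frac_le) auto
                ultimately show "1 / real (2*N+c) \<le> d x" by linarith
              qed
              show "\<forall>y\<in>R (2*N+c). d y \<le> 1 / real (Suc (2*N+c))"
                by (auto simp: R_def Aj_def)
              show "1 / real (Suc (2*N+c)) < 1 / real (2*N+c)"
                using False by (intro divide_strict_left_mono) auto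
            qed
          qed
          also have "(\<Union>i<N. R (2*i+c)) \<union> R (2*N+c) = (\<Union>i<Suc N. R (2*i+c))"
            by (auto simp: lessThan_Suc)
          finally show ?case .
        qed
        have RA: "R j \<subseteq> A" for j using AjB BA by (auto simp: R_def)
        have par2: "(\<Sum>i<N. ?H (R (2*i+c))) \<le> ?H A" for N c
          using par[of c N] H_mono[of "\<Union>i<N. R (2*i+c)" A k] RA
          by (meson UN_least order_trans)
        have sumR: "(\<Sum>j. ?H (R j)) \<le> ?H A + ?H A"
        proof (rule suminf_le_const)
          fix n
          have "(\<Sum>j<n. ?H (R j)) \<le> (\<Sum>j<2*n. ?H (R j))"
            by (rule sum_mono2) auto
          also have "\<dots> = (\<Sum>i<n. ?H (R (2*i+0))) + (\<Sum>i<n. ?H (R (2*i+1)))"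
            by (simp add: sum_even_odd_gen)
          also have "\<dots> \<le> ?H A + ?H A" by (intro add_mono par2)
          finally show "(\<Sum>j<n. ?H (R j)) \<le> ?H A + ?H A" .
        qed auto
        define r where "r j = enn2real (?H (R j))" for j
        have Rfin: "?H (R j) \<noteq> top" for j
          using H_mono[OF RA[of j], of k] finA by (auto simp: top_unique)
        have Rr: "?H (R j) = ennreal (r j)" for j
          using Rfin[of j] unfolding r_def by (simp add: ennreal_enn2real_if)
        have r0: "0 \<le> r j" for j by (simp add: r_def)
        have "(\<Sum>j. ennreal (r j)) \<noteq> top"
          using sumR finA unfolding Rr[symmetric] by (auto simp: top_unique)
        then have summ: "summable r" using r0 by (intro summable_suminf_not_top) auto
        have cov: "B \<subseteq> Aj j \<union> (\<Union>i. R (i + j))" for j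
        proof
          fix x assume "x \<in> B"
          then obtain m where "inverse (real (Suc m)) < d x"
            using dpos reals_Archimedean by blast
          then have "x \<in> Aj m" using \<open>x \<in> B\<close> by (auto simp: Aj_def field_simps)
          then have xm: "x \<in> Aj (j + m)" using Aj_mono[of m "j+m"] by auto
          have "x \<in> Aj (j + m) \<longrightarrow> x \<in> Aj j \<or> (\<exists>i. x \<in> R (i + j))" for m
          proof (induction m)
            case 0 then show ?case by simp
          next
            case (Suc m)
            then show ?case by (auto simp: R_def add.commute)
          qed
          with xm show "x \<in> Aj j \<union> (\<Union>i. R (i + j))" by blast
        qed
        have tail: "?H B \<le> ?H (Aj j) + ennreal (\<Sum>i. r (i + j))" for j
        proof -
          have "?H B \<le> ?H (Aj j \<union> (\<Union>i. R (i + j)))" using cov by (rule H_mono)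
          also have "\<dots> \<le> ?H (Aj j) + ?H (\<Union>i. R (i + j))" by (rule H_subadd)
          also have "?H (\<Union>i. R (i + j)) \<le> (\<Sum>i. ?H (R (i + j)))" by (rule H_countable_subadd)
          also have "(\<Sum>i. ?H (R (i + j))) = ennreal (\<Sum>i. r (i + j))"
            unfolding Rr using summ r0 by (intro suminf_ennreal2 summable_ignore_initial_segment) auto
          finally show ?thesis by (simp add: add_left_mono)
        qed
        show ?thesis unfolding B_def[symmetric] D_def[symmetric]
        proof (rule ennreal_le_epsilon)
          fix e :: real assume "0 < e"
          then obtain N where N: "\<forall>n\<ge>N. norm (\<Sum>i. r (i + n)) < e"
            using suminf_exist_split[OF _ summ] by blast
          then have tN: "(\<Sum>i. r (i + N)) \<le> e" by (metis abs_less_iff order_refl real_norm_def less_imp_le)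
          have "?H B + ?H D \<le> (?H (Aj N) + ennreal (\<Sum>i. r (i + N))) + ?H D"
            using tail by (rule add_right_mono)
          also have "\<dots> = (?H (Aj N) + ?H D) + ennreal (\<Sum>i. r (i + N))" by (simp add: ac_simps)
          also have "\<dots> \<le> ?H A + ennreal e"
            using a_step tN by (intro add_mono ennreal_leI)
          finally show "?H B + ?H D \<le> ?H A + ennreal e" .
        qed
      qed
    qed
  qed
qed



lemma vec_expand: "(v::real^'n) = (\<Sum>l\<in>UNIV. (v $ l) *\<^sub>R axis l 1)"
  by (simp add: vec_eq_iff axis_def sum_component if_distrib cong: if_cong)

lemma multilin_expand:
  fixes \<phi> :: "(nat \<Rightarrow> real^'n) \<Rightarrow> real"
  assumes lin: "\<forall>v. \<forall>i<k. linear (\<lambda>z. \<phi> (v(i := z)))"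
  shows "m \<le> k \<Longrightarrow> \<phi> v = (\<Sum>j\<in>PiE {..<m} (\<lambda>_. UNIV).
            (\<Prod>i<m. v i $ j i) * \<phi> (\<lambda>i. if i < m then axis (j i) 1 else v i))"
proof (induction m)
  case 0
  then show ?case by simp
next
  case (Suc m)
  let ?P = "PiE {..<m} (\<lambda>_. UNIV :: 'n set)"
  define w where "w j = (\<lambda>i. if i < m then axis (j i) 1 else v i)" for j :: "nat \<Rightarrow> 'n"
  define w' where "w' j = (\<lambda>i. if i < Suc m then axis (j i) 1 else v i)" for j :: "nat \<Rightarrow> 'n"
  have IH: "\<phi> v = (\<Sum>j\<in>?P. (\<Prod>i<m. v i $ j i) * \<phi> (w j))"
    using Suc by (simp add: w_def)
  have step: "\<phi> (w j) = (\<Sum>l\<in>UNIV. (v m $ l) * \<phi> (w' (j(m := l))))" for j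
  proof -
    have L: "linear (\<lambda>z. \<phi> ((w j)(m := z)))" using lin Suc.prems by auto
    have e1: "w j = (w j)(m := (\<Sum>l\<in>UNIV. (v m $ l) *\<^sub>R axis l 1))"
      by (simp add: w_def fun_eq_iff vec_expand[of "v m", symmetric])
    have "\<phi> (w j) = \<phi> ((w j)(m := (\<Sum>l\<in>UNIV. (v m $ l) *\<^sub>R axis l 1)))"
      using e1 by (rule arg_cong)
    also have "\<dots> = (\<Sum>l\<in>UNIV. \<phi> ((w j)(m := (v m $ l) *\<^sub>R axis l 1)))"
      using linear_sum[OF L] by simp
    also have "\<dots> = (\<Sum>l\<in>UNIV. (v m $ l) * \<phi> ((w j)(m := axis l 1)))"
      using linear_cmul[OF L] by simp
    also have "\<dots> = (\<Sum>l\<in>UNIV. (v m $ l) * \<phi> (w' (j(m := l))))"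
    proof -
      have "(w j)(m := axis l 1) = w' (j(m := l))" for l
        by (auto simp: w_def w'_def fun_eq_iff)
      then show ?thesis by simp
    qed
    finally show ?thesis .
  qed
  have prodeq: "(\<Prod>i<Suc m. v i $ (j(m := l)) i) = (\<Prod>i<m. v i $ j i) * v m $ l" for j l
  proof -
    have "(\<Prod>i<m. v i $ (j(m := l)) i) = (\<Prod>i<m. v i $ j i)" by (intro prod.cong) auto
    then show ?thesis by simp
  qed
  have "\<phi> v = (\<Sum>j\<in>?P. \<Sum>l\<in>UNIV. (\<Prod>i<Suc m. v i $ (j(m := l)) i) * \<phi> (w' (j(m := l))))"
    unfolding IH step by (simp add: sum_distrib_left prodeq mult.assoc)
  also have "\<dots> = (\<Sum>(l, j)\<in>UNIV \<times> ?P. (\<Prod>i<Suc m. v i $ (j(m := l)) i) * \<phi> (w' (j(m := l))))"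
    by (subst sum.swap) (simp add: sum.cartesian_product)
  also have "\<dots> = (\<Sum>j'\<in>(\<lambda>(y, g). g(m := y)) ` (UNIV \<times> ?P). (\<Prod>i<Suc m. v i $ j' i) * \<phi> (w' j'))"
    by (subst sum.reindex) (auto intro!: inj_combinator simp: case_prod_beta)
  also have "(\<lambda>(y, g). g(m := y)) ` (UNIV \<times> ?P) = PiE {..<Suc m} (\<lambda>_. UNIV)"
    by (simp add: lessThan_Suc PiE_insert_eq)
  finally show ?case by (simp add: w'_def)
qed



definition ej :: "nat \<Rightarrow> (nat \<Rightarrow> 'n) \<Rightarrow> nat \<Rightarrow> real^'n" where
  "ej k j = (\<lambda>i. if i < k then axis (j i) 1 else 0)"

lemma covec_expand:
  fixes \<phi> :: "'n::finite covec"
  assumes "is_covector k \<phi>"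
  shows "\<phi> v = (\<Sum>j\<in>PiE {..<k} (\<lambda>_. UNIV). (\<Prod>i<k. v i $ j i) * \<phi> (ej k j))"
proof -
  have lin: "\<forall>v. \<forall>i<k. linear (\<lambda>z. \<phi> (v(i := z)))" using assms by (simp add: is_covector_def)
  have eq: "\<phi> (\<lambda>i. if i < k then axis (j i) 1 else v i) = \<phi> (ej k j)" for j
  proof -
    from assms have dep: "\<And>v w. (\<forall>i<k. v i = w i) \<Longrightarrow> \<phi> v = \<phi> w" by (simp add: is_covector_def)
    show ?thesis by (rule dep) (simp add: ej_def)
  qed
  have "\<phi> v = (\<Sum>j\<in>PiE {..<k} (\<lambda>_. UNIV).
            (\<Prod>i<k. v i $ j i) * \<phi> (\<lambda>i. if i < k then axis (j i) 1 else v i))"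
    by (rule multilin_expand[OF lin]) simp
  then show ?thesis by (simp add: eq)
qed

definition MSP :: "nat \<Rightarrow> ('n::finite) itself \<Rightarrow> bool" where
  "MSP k TYPE('n::finite) \<longleftrightarrow> measure_space UNIV (sigma_sets UNIV {S :: (real^'n) set. hk_measurable k S}) (hausdorff_outer k)"

lemma space_HM[simp]: "space (hausdorff_measure k :: (real^'n::finite) measure) = UNIV"
  unfolding hausdorff_measure_def by (simp add: space_measure_of_conv)

lemma sets_HM: "sets (hausdorff_measure k :: (real^'n::finite) measure) = sigma_sets UNIV {S. hk_measurable k S}"
  unfolding hausdorff_measure_def by (simp add: sets_measure_of_conv)

lemma hk_in_sets: "hk_measurable k S \<Longrightarrow> S \<in> sets (hausdorff_measure k)"
  unfolding sets_HM by auto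

lemma borel_sub_HM: "sets borel \<subseteq> sets (hausdorff_measure k :: (real^'n::finite) measure)"
  unfolding sets_HM sets_borel
  by (rule sigma_sets_mono') (auto intro: open_hk_measurable)

lemma meas_borel_HM:
  "f \<in> borel_measurable borel \<Longrightarrow> f \<in> borel_measurable (hausdorff_measure k :: (real^'n::finite) measure)"
  by (rule borel_measurable_subalgebra[OF borel_sub_HM]) auto

lemma emeasure_HM:
  "MSP k TYPE('n::finite) \<Longrightarrow> hk_measurable k S \<Longrightarrow>
     emeasure (hausdorff_measure k :: (real^'n) measure) S = hausdorff_outer k S"
  unfolding hausdorff_measure_def MSP_def emeasure_measure_of_conv by auto

lemma emeasure_HM0:
  "\<not> MSP k TYPE('n::finite) \<Longrightarrow> emeasure (hausdorff_measure k :: (real^'n) measure) S = 0"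
  unfolding hausdorff_measure_def MSP_def emeasure_measure_of_conv by auto

lemma form_int:
  fixes \<omega> :: "'n::finite kform"
  assumes E: "compact E" and om: "dform k E \<omega>" and ms: "MSP k TYPE('n)"
  shows "\<exists>B. \<forall>S u. oriented_rect k E S u \<longrightarrow>
     set_integrable (hausdorff_measure k) S (\<lambda>x. \<omega> x (u x)) \<and> \<bar>avg_current k S u \<omega>\<bar> \<le> B"
proof -
  let ?M = "hausdorff_measure k :: (real^'n) measure"
  let ?P = "PiE {..<k} (\<lambda>_. UNIV :: 'n set)"
  have finP: "finite ?P" by (simp add: finite_PiE)
  have cont: "continuous_on E (\<lambda>x. \<omega> x (ej k j))" for j using om by (simp add: dform_def)
  have "\<exists>b. \<forall>x\<in>E. \<bar>\<omega> x (ej k j)\<bar> \<le> b" for j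
  proof -
    have "bounded ((\<lambda>x. \<omega> x (ej k j)) ` E)"
      by (rule compact_imp_bounded[OF compact_continuous_image[OF cont E]])
    then show ?thesis unfolding bounded_iff by auto
  qed
  then obtain b where b: "\<And>j x. x \<in> E \<Longrightarrow> \<bar>\<omega> x (ej k j)\<bar> \<le> b j" by metis
  define B where "B = (\<Sum>j\<in>?P. \<bar>b j\<bar>)"
  have B0: "0 \<le> B" unfolding B_def by (simp add: sum_nonneg)
  have Eb: "E \<in> sets borel" using E by (simp add: compact_imp_closed)
  show ?thesis
  proof (intro exI allI impI)
    fix S u assume or: "oriented_rect k E S u"
    have SE: "S \<subseteq> E" and Sm: "S \<in> sets ?M" and Hpos: "0 < hausdorff_outer k S"
      and Hfin: "hausdorff_outer k S < \<infinity>" and ori: "orientation k S u"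
      using or by (auto simp: oriented_rect_def hk_in_sets)
    have emS: "emeasure ?M S = hausdorff_outer k S"
      using or ms by (intro emeasure_HM) (auto simp: oriented_rect_def)
    have umeas: "(\<lambda>x. u x i) \<in> borel_measurable ?M" if "i < k" for i
      using ori that by (simp add: orientation_def)
    have AEo: "AE x in ?M. x \<in> S \<longrightarrow> (\<forall>i<k. \<forall>j<k. u x i \<bullet> u x j = (if i = j then 1 else 0))"
      using ori unfolding orientation_def by (auto elim: AE_mp)
    define f where "f x = indicator S x * \<omega> x (u x)" for x
    have feq: "f x = (\<Sum>j\<in>?P. (\<Prod>i<k. u x i $ j i) * (indicator S x * (indicator E x *\<^sub>R \<omega> x (ej k j))))" for x
    proof (cases "x \<in> S")
      case True
      then have "x \<in> E" using SE by auto
      then have "is_covector k (\<omega> x)" using om by (simp add: dform_def)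
      from covec_expand[OF this, of "u x"] True \<open>x \<in> E\<close> show ?thesis
        by (simp add: f_def)
    qed (simp add: f_def)
    have fmeas: "f \<in> borel_measurable ?M"
    proof -
      have m1: "(\<lambda>x. u x i $ l) \<in> borel_measurable ?M" if "i < k" for i l
        using measurable_compose[OF umeas[OF that] borel_measurable_nth] by simp
      have m2: "(\<lambda>x. indicator E x *\<^sub>R \<omega> x (ej k j)) \<in> borel_measurable ?M" for j
        by (rule meas_borel_HM, rule borel_measurable_continuous_on_indicator[OF Eb cont])
      have m3: "(\<lambda>x. indicator S x :: real) \<in> borel_measurable ?M"
        using Sm by simp
      have "(\<lambda>x. \<Sum>j\<in>?P. (\<Prod>i<k. u x i $ j i) * (indicator S x * (indicator E x *\<^sub>R \<omega> x (ej k j))))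
             \<in> borel_measurable ?M"
        using m1 m2 m3 by (intro borel_measurable_sum borel_measurable_times borel_measurable_prod) auto
      moreover have "f = (\<lambda>x. \<Sum>j\<in>?P. (\<Prod>i<k. u x i $ j i) * (indicator S x * (indicator E x *\<^sub>R \<omega> x (ej k j))))"
        by (rule ext) (rule feq)
      ultimately show ?thesis by simp
    qed
    have bound: "AE x in ?M. norm (f x) \<le> norm (indicator S x * B)"
      using AEo
    proof (rule AE_mp, intro AE_I2 impI)
      fix x assume o: "x \<in> S \<longrightarrow> (\<forall>i<k. \<forall>j<k. u x i \<bullet> u x j = (if i = j then 1 else 0))"
      show "norm (f x) \<le> norm (indicator S x * B)"
      proof (cases "x \<in> S")
        case False then show ?thesis by (simp add: f_def)
      next
        case True
        then have xE: "x \<in> E" using SE by auto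
        have n1: "\<bar>u x i $ l\<bar> \<le> 1" if "i < k" for i l
        proof -
          have "u x i \<bullet> u x i = 1" using o True that by auto
          then have "norm (u x i) = 1" by (simp add: norm_eq_1)
          then show ?thesis using component_le_norm_cart[of "u x i" l] by simp
        qed
        have p1: "\<bar>\<Prod>i<k. u x i $ j i\<bar> \<le> 1" for j
          unfolding abs_prod by (rule prod_le_1) (use n1 in auto)
        have "\<bar>f x\<bar> = \<bar>\<Sum>j\<in>?P. (\<Prod>i<k. u x i $ j i) * \<omega> x (ej k j)\<bar>"
          unfolding feq using True xE by simp
        also have "\<dots> \<le> (\<Sum>j\<in>?P. \<bar>(\<Prod>i<k. u x i $ j i) * \<omega> x (ej k j)\<bar>)"
          by (rule sum_abs)
        also have "\<dots> \<le> (\<Sum>j\<in>?P. \<bar>b j\<bar>)"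
        proof (rule sum_mono)
          fix j
          have "\<bar>(\<Prod>i<k. u x i $ j i) * \<omega> x (ej k j)\<bar> = \<bar>\<Prod>i<k. u x i $ j i\<bar> * \<bar>\<omega> x (ej k j)\<bar>"
            by (simp add: abs_mult)
          also have "\<dots> \<le> 1 * \<bar>b j\<bar>"
            using p1[of j] b[OF xE, of j] by (intro mult_mono) auto
          finally show "\<bar>(\<Prod>i<k. u x i $ j i) * \<omega> x (ej k j)\<bar> \<le> \<bar>b j\<bar>" by simp
        qed
        finally show ?thesis using True B0 by (simp add: B_def)
      qed
    qed
    have intS: "integrable ?M (\<lambda>x. indicator S x * B)"
    proof -
      have "integrable ?M (indicator S :: _ \<Rightarrow> real)"
        by (rule integrable_real_indicator) (use Sm Hfin emS in auto)
      then show ?thesis by (rule integrable_mult_left)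
    qed
    have fint: "integrable ?M f"
      by (rule Bochner_Integration.integrable_bound[OF intS fmeas bound])
    then show "set_integrable ?M S (\<lambda>x. \<omega> x (u x)) \<and> \<bar>avg_current k S u \<omega>\<bar> \<le> B"
    proof -
      have si: "set_integrable ?M S (\<lambda>x. \<omega> x (u x))"
        using fint unfolding set_integrable_def f_def by simp
      have "\<bar>set_lebesgue_integral ?M S (\<lambda>x. \<omega> x (u x))\<bar> = \<bar>integral\<^sup>L ?M f\<bar>"
        unfolding set_lebesgue_integral_def f_def by simp
      also have "\<dots> \<le> integral\<^sup>L ?M (\<lambda>x. \<bar>f x\<bar>)" by (rule integral_abs_bound)
      also have "\<dots> \<le> integral\<^sup>L ?M (\<lambda>x. indicator S x * B)"
        using fint intS bound by (intro integral_mono_AE) (auto elim!: AE_mp simp: abs_mult B0)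
      also have "\<dots> = measure ?M S * B" by (simp add: integral_indicator)
      also have "measure ?M S = enn2real (hausdorff_outer k S)" by (simp add: measure_def emS)
      finally have I: "\<bar>set_lebesgue_integral ?M S (\<lambda>x. \<omega> x (u x))\<bar> \<le> enn2real (hausdorff_outer k S) * B" .
      have hp: "0 < enn2real (hausdorff_outer k S)"
        using Hpos Hfin by (simp add: enn2real_positive_iff)
      have "\<bar>avg_current k S u \<omega>\<bar> = \<bar>set_lebesgue_integral ?M S (\<lambda>x. \<omega> x (u x))\<bar> / enn2real (hausdorff_outer k S)"
        unfolding avg_current_def by simp
      also have "\<dots> \<le> B" using I hp by (simp add: divide_le_eq mult.commute)
      finally show ?thesis using si by simp
    qed
  qed
qed



lemma linear_comb: "linear F \<Longrightarrow> linear G \<Longrightarrow> linear (\<lambda>z. a * F z + b * (G z :: real))"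
  unfolding linear_iff by (simp add: linear_add linear_cmul algebra_simps)

lemma is_covector_comb:
  assumes "is_covector k \<phi>" "is_covector k \<psi>"
  shows "is_covector k (\<lambda>v. a * \<phi> v + b * \<psi> v)"
  using assms unfolding is_covector_def
  by (auto intro!: linear_comb) (metis)+

lemma poly_fun_comb:
  fixes f g :: "real^'n \<Rightarrow> real"
  assumes "poly_fun r f" "poly_fun r g"
  shows "poly_fun r (\<lambda>x. a * f x + b * g x)"
proof -
  from assms obtain c1 c2 where
    c1: "\<forall>x. f x = (\<Sum>\<alpha>\<in>{\<alpha> :: 'n \<Rightarrow> nat. sum \<alpha> UNIV \<le> r}. c1 \<alpha> * (\<Prod>i\<in>UNIV. (x $ i) ^ \<alpha> i))" and
    c2: "\<forall>x. g x = (\<Sum>\<alpha>\<in>{\<alpha> :: 'n \<Rightarrow> nat. sum \<alpha> UNIV \<le> r}. c2 \<alpha> * (\<Prod>i\<in>UNIV. (x $ i) ^ \<alpha> i))"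
    unfolding poly_fun_def by blast
  show ?thesis unfolding poly_fun_def
    by (rule exI[of _ "\<lambda>\<alpha>. a * c1 \<alpha> + b * c2 \<alpha>"])
       (simp add: c1 c2 sum_distrib_left sum.distrib algebra_simps)
qed

lemma finite_multi: "finite {\<alpha> :: 'n::finite \<Rightarrow> nat. sum \<alpha> UNIV \<le> r}"
proof (rule finite_subset)
  show "{\<alpha> :: 'n \<Rightarrow> nat. sum \<alpha> UNIV \<le> r} \<subseteq> PiE UNIV (\<lambda>_. {..r})"
  proof
    fix \<alpha> :: "'n \<Rightarrow> nat" assume "\<alpha> \<in> {\<alpha>. sum \<alpha> UNIV \<le> r}"
    then have "\<alpha> i \<le> r" for i using member_le_sum[of i UNIV \<alpha>] by auto
    then show "\<alpha> \<in> PiE UNIV (\<lambda>_. {..r})" by (auto simp: PiE_iff)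
  qed
qed (simp add: finite_PiE)

lemma poly_fun_const:
  shows "poly_fun r (\<lambda>x :: real^'n::finite. c)"
proof -
  have "(\<Sum>\<alpha>\<in>{\<alpha> :: 'n \<Rightarrow> nat. sum \<alpha> UNIV \<le> r}. (if \<alpha> = (\<lambda>_. 0) then c else 0) * (\<Prod>i\<in>UNIV. (x $ i) ^ \<alpha> i)) = c"
    for x :: "real^'n"
  proof -
    have "(\<Sum>\<alpha>\<in>{\<alpha> :: 'n \<Rightarrow> nat. sum \<alpha> UNIV \<le> r}. (if \<alpha> = (\<lambda>_. 0) then c else 0) * (\<Prod>i\<in>UNIV. (x $ i) ^ \<alpha> i))
        = (\<Sum>\<alpha>\<in>{\<alpha> :: 'n \<Rightarrow> nat. sum \<alpha> UNIV \<le> r}. (if \<alpha> = (\<lambda>_. 0) then c else 0))"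
      by (intro sum.cong) auto
    also have "\<dots> = c" using finite_multi[of r] by (subst sum.delta) auto
    finally show ?thesis .
  qed
  then show ?thesis unfolding poly_fun_def
    by (intro exI[of _ "\<lambda>\<alpha>. if \<alpha> = (\<lambda>_. 0) then c else 0"]) simp
qed

lemma poly_fun_cont:
  fixes f :: "real^'n \<Rightarrow> real"
  shows "poly_fun r f \<Longrightarrow> continuous_on UNIV f"
proof -
  assume "poly_fun r f"
  then obtain c where "\<forall>x. f x = (\<Sum>\<alpha>\<in>{\<alpha> :: 'n \<Rightarrow> nat. sum \<alpha> UNIV \<le> r}. c \<alpha> * (\<Prod>i\<in>UNIV. (x $ i) ^ \<alpha> i))"
    unfolding poly_fun_def by blast
  then have "f = (\<lambda>x. \<Sum>\<alpha>\<in>{\<alpha> :: 'n \<Rightarrow> nat. sum \<alpha> UNIV \<le> r}. c \<alpha> * (\<Prod>i\<in>UNIV. (x $ i) ^ \<alpha> i))"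
    by auto
  then show ?thesis by (simp add: continuous_intros continuous_on_component)
qed

lemma pform_comb: "pform r k p \<Longrightarrow> pform r k q \<Longrightarrow> pform r k (\<lambda>x v. a * p x v + b * q x v)"
  unfolding pform_def by (auto intro: is_covector_comb poly_fun_comb)

lemma pform_zero: "pform r k (\<lambda>x v. 0)"
proof -
  have "is_covector k (\<lambda>v. 0 :: real)" unfolding is_covector_def by (simp add: linear_iff)
  moreover have "poly_fun r (\<lambda>x. 0)" by (rule poly_fun_const)
  ultimately show ?thesis unfolding pform_def by simp
qed

lemma pform_dform: "pform r k p \<Longrightarrow> dform k E p"
  unfolding pform_def dform_def using poly_fun_cont continuous_on_subset by blast

lemma dform_comb: "dform k E f \<Longrightarrow> dform k E g \<Longrightarrow> dform k E (\<lambda>x v. a * f x v + b * g x v)"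
  unfolding dform_def by (auto intro!: is_covector_comb continuous_on_add continuous_on_mult_left)

lemma form_minus: "(f :: 'n::finite kform) - g = (\<lambda>x v. 1 * f x v + (-1) * g x v)"
  by (simp add: fun_eq_iff)



lemma avg_comb:
  fixes f g :: "'n::finite kform"
  assumes E: "compact E" and ms: "MSP k TYPE('n)" and f: "dform k E f" and g: "dform k E g"
    and or: "oriented_rect k E S u"
  shows "avg_current k S u (\<lambda>x v. a * f x v + b * g x v) = a * avg_current k S u f + b * avg_current k S u g"
proof -
  let ?M = "hausdorff_measure k :: (real^'n) measure"
  have If: "set_integrable ?M S (\<lambda>x. f x (u x))" using form_int[OF E f ms] or by blast
  have Ig: "set_integrable ?M S (\<lambda>x. g x (u x))" using form_int[OF E g ms] or by blast
  have "set_lebesgue_integral ?M S (\<lambda>x. a * f x (u x) + b * g x (u x))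
      = set_lebesgue_integral ?M S (\<lambda>x. a * f x (u x)) + set_lebesgue_integral ?M S (\<lambda>x. b * g x (u x))"
    using If Ig by (intro set_integral_add(2) set_integrable_mult_right)
  also have "\<dots> = a * set_lebesgue_integral ?M S (\<lambda>x. f x (u x)) + b * set_lebesgue_integral ?M S (\<lambda>x. g x (u x))"
    by (simp add: set_integral_mult_right)
  finally show ?thesis unfolding avg_current_def by (simp add: add_divide_distrib)
qed

lemma avg_zero_nonMS:
  fixes f :: "'n::finite kform"
  assumes "\<not> MSP k TYPE('n)"
  shows "avg_current k S u f = 0"
proof -
  let ?M = "hausdorff_measure k :: (real^'n) measure"
  have "UNIV \<in> null_sets ?M"
    using emeasure_HM0[OF assms] by (auto simp: null_sets_def sets.top[of ?M, simplified])
  then have "AE x in ?M. indicator S x *\<^sub>R f x (u x) = (0::real)"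
    by (rule AE_I') auto
  then have "set_lebesgue_integral ?M S (\<lambda>x. f x (u x)) = 0"
    unfolding set_lebesgue_integral_def by (rule integral_eq_zero_AE)
  then show ?thesis unfolding avg_current_def by simp
qed

lemma norm0_upper:
  assumes "\<exists>B. \<forall>S u. oriented_rect k E S u \<longrightarrow> \<bar>avg_current k S u f\<bar> \<le> B"
    and "oriented_rect k E S u"
  shows "\<bar>avg_current k S u f\<bar> \<le> norm0 k E f"
  unfolding norm0_def
proof (rule cSup_upper)
  show "\<bar>avg_current k S u f\<bar> \<in> {\<bar>avg_current k S u f\<bar> | S u. oriented_rect k E S u}"
    using assms(2) by blast
  from assms(1) obtain B where "\<forall>S u. oriented_rect k E S u \<longrightarrow> \<bar>avg_current k S u f\<bar> \<le> B" by blast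
  then show "bdd_above {\<bar>avg_current k S u f\<bar> | S u. oriented_rect k E S u}"
    by (auto intro!: bdd_aboveI[of _ B])
qed

lemma norm0_least:
  assumes "oriented_rect k E S0 u0"
    and "\<And>S u. oriented_rect k E S u \<Longrightarrow> \<bar>avg_current k S u f\<bar> \<le> b"
  shows "norm0 k E f \<le> b"
  unfolding norm0_def
  by (rule cSup_least) (use assms in auto)

lemma norm0_const0:
  assumes "oriented_rect k E S0 u0" "\<And>S u. avg_current k S u f = 0"
  shows "norm0 k E f = 0"
proof -
  have "{\<bar>avg_current k S u f\<bar> | S u. oriented_rect k E S u} = {0}"
    using assms by auto
  then show ?thesis unfolding norm0_def by simp
qed

section \<open>A nonzero constant covector\<close>

definition lf :: "nat \<Rightarrow> (nat \<Rightarrow> real^'n \<Rightarrow> real) \<Rightarrow> (nat \<Rightarrow> real^'n) \<Rightarrow> real" where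
  "lf k g v = (\<Sum>p\<in>{p. p permutes {..<k}}. of_int (sign p) * (\<Prod>i<k. g (p i) (v i)))"

lemma lf_covector:
  fixes g :: "nat \<Rightarrow> real^'n::finite \<Rightarrow> real"
  assumes lin: "\<And>j. linear (g j)"
  shows "is_covector k (lf k g)"
  unfolding is_covector_def
proof (intro conjI allI impI)
  fix v w :: "nat \<Rightarrow> real^'n" assume "\<forall>i<k. v i = w i"
  then show "lf k g v = lf k g w" unfolding lf_def by (intro sum.cong refl arg_cong2[where f = "(*)"] prod.cong) auto
next
  fix v :: "nat \<Rightarrow> real^'n" and i assume i: "i < k"
  have eq: "lf k g (v(i := z)) = (\<Sum>p\<in>{p. p permutes {..<k}}. of_int (sign p) *
       (g (p i) z * (\<Prod>l\<in>{..<k} - {i}. g (p l) (v l))))" for z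
    unfolding lf_def
  proof (intro sum.cong refl arg_cong2[where f = "(*)"])
    fix p
    have "(\<Prod>l<k. g (p l) ((v(i := z)) l)) = g (p i) ((v(i := z)) i) * (\<Prod>l\<in>{..<k} - {i}. g (p l) ((v(i := z)) l))"
      using i by (intro prod.remove) auto
    also have "(\<Prod>l\<in>{..<k} - {i}. g (p l) ((v(i := z)) l)) = (\<Prod>l\<in>{..<k} - {i}. g (p l) (v l))"
      by (intro prod.cong) auto
    finally show "(\<Prod>l<k. g (p l) ((v(i := z)) l)) = g (p i) z * (\<Prod>l\<in>{..<k} - {i}. g (p l) (v l))" by simp
  qed
  show "linear (\<lambda>z. lf k g (v(i := z)))"
    unfolding eq
  proof (rule linear_compose_sum, intro ballI)
    fix p
    show "linear (\<lambda>z. of_int (sign p) * (g (p i) z * (\<Prod>l\<in>{..<k} - {i}. g (p l) (v l))))"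
      using lin[of "p i"] unfolding linear_iff by (simp add: linear_add linear_cmul algebra_simps)
  qed
next
  fix v :: "nat \<Rightarrow> real^'n" and i j assume ij0: "i < k" "j < k" "i \<noteq> j \<and> v i = v j"
  then have ij: "i < k \<and> j < k \<and> i \<noteq> j \<and> v i = v j" by simp
  define \<tau> where "\<tau> = Transposition.transpose i j"
  have tau: "\<tau> permutes {..<k}" using ij unfolding \<tau>_def by (intro permutes_swap_id) auto
  have tt: "\<tau> \<circ> \<tau> = id" unfolding \<tau>_def by (rule transpose_comp_involutory)
  have vt: "v (\<tau> l) = v l" for l using ij by (auto simp: \<tau>_def Transposition.transpose_def)
  let ?P = "{p. p permutes {..<k}}"
  let ?F = "\<lambda>p. of_int (sign p) * (\<Prod>l<k. g (p l) (v l))"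
  have inv1: "p \<circ> \<tau> \<circ> \<tau> = p" for p :: "nat \<Rightarrow> nat" using tt by (simp add: comp_assoc)
  have mem: "p \<circ> \<tau> \<in> ?P" if "p \<in> ?P" for p using that tau by (simp add: permutes_compose)
  have Fp: "- ?F (p \<circ> \<tau>) = ?F p" if "p \<in> ?P" for p
  proof -
    from that have p: "p permutes {..<k}" by simp
    have sgn: "sign (p \<circ> \<tau>) = - sign p"
    proof -
      have "permutation p" "permutation \<tau>" using p tau by (auto simp: permutation_permutes)
      then have "sign (p \<circ> \<tau>) = sign p * sign \<tau>" by (rule sign_compose)
      also have "sign \<tau> = -1" using ij unfolding \<tau>_def by (simp add: sign_swap_id)
      finally show ?thesis by (simp add: comp_def)
    qed
    have pr: "(\<Prod>l<k. g ((p \<circ> \<tau>) l) (v l)) = (\<Prod>l<k. g (p l) (v l))"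
    proof -
      have "(\<Prod>l<k. g (p l) (v l)) = (\<Prod>l<k. g (p (\<tau> l)) (v (\<tau> l)))"
        using prod.permute[OF tau, of "\<lambda>l. g (p l) (v l)"] by (simp add: comp_def)
      then show ?thesis by (simp add: vt)
    qed
    show ?thesis using sgn pr by simp
  qed
  have "sum ?F ?P = sum (\<lambda>p. - ?F p) ?P"
    apply (rule sum.reindex_bij_witness[where i = "\<lambda>p. p \<circ> \<tau>" and j = "\<lambda>p. p \<circ> \<tau>"])
        apply (rule inv1)
       apply (erule mem)
      apply (rule inv1)
     apply (erule mem)
    apply (erule Fp)
    done
  then have "lf k g v = sum (\<lambda>p. - ?F p) ?P" unfolding lf_def .
  also have "\<dots> = - lf k g v" unfolding lf_def by (simp add: sum_negf)
  finally show "lf k g v = 0" by simp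
qed

lemma lf_dual:
  fixes g :: "nat \<Rightarrow> real^'n::finite \<Rightarrow> real"
  assumes "\<And>i j. i < k \<Longrightarrow> j < k \<Longrightarrow> g j (a i) = (if i = j then 1 else 0)"
  shows "lf k g a = 1"
proof -
  let ?P = "{p. p permutes {..<k}}"
  have fin: "finite ?P" by (simp add: finite_permutations)
  have idP: "id \<in> ?P" by (simp add: permutes_id)
  have z: "of_int (sign p) * (\<Prod>i<k. g (p i) (a i)) = 0" if "p \<in> ?P - {id}" for p
  proof -
    from that have p: "p permutes {..<k}" "p \<noteq> id" by auto
    then obtain i where i: "p i \<noteq> i" by (auto simp: fun_eq_iff)
    then have "i < k" using p(1) by (meson lessThan_iff permutes_not_in)
    then have "p i < k" using p(1) permutes_in_image by fastforce
    then have "g (p i) (a i) = 0" using assms[OF \<open>i < k\<close> \<open>p i < k\<close>] i by simp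
    then show ?thesis using \<open>i < k\<close> by (simp add: prod_zero_iff[of "{..<k}"]) (metis lessThan_iff)
  qed
  have "lf k g a = (\<Sum>p\<in>?P. if p = id then 1 else 0)"
    unfolding lf_def
  proof (rule sum.cong[OF refl])
    fix p assume pP: "p \<in> ?P"
    show "of_int (sign p) * (\<Prod>i<k. g (p i) (a i)) = (if p = id then 1 else 0)"
    proof (cases "p = id")
      case True
      have "(\<Prod>i<k. g (id i) (a i)) = 1" using assms by (intro prod.neutral) auto
      then show ?thesis using True by (simp add: sign_id)
    next
      case False then show ?thesis using z pP by simp
    qed
  qed
  also have "\<dots> = 1" using fin idP by simp
  finally show ?thesis .
qed

lemma dual_exists:
  fixes a :: "nat \<Rightarrow> real^'n::finite"
  assumes "dim (a ` {..<k}) = k"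
  shows "\<exists>g :: nat \<Rightarrow> real^'n \<Rightarrow> real. (\<forall>j. linear (g j)) \<and> (\<forall>i<k. \<forall>j<k. g j (a i) = (if i = j then 1 else 0))"
proof -
  let ?A = "a ` {..<k}"
  have finA: "finite ?A" by simp
  have c1: "card ?A \<le> k" using card_image_le[of "{..<k}" a] by simp
  have c2: "k \<le> card ?A" using dim_le_card'[OF finA] assms by simp
  have inj: "inj_on a {..<k}" using c1 c2 by (intro eq_card_imp_inj_on) auto
  have ind: "independent ?A"
    using finA c1 assms by (intro card_le_dim_spanning[of ?A ?A]) (auto intro: span_base)
  have "\<forall>j. \<exists>h :: real^'n \<Rightarrow> real. linear h \<and> (\<forall>x\<in>?A. h x = (if x = a j then 1 else 0))"
    by (intro allI linear_independent_extend[OF ind])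
  then have "\<exists>g :: nat \<Rightarrow> real^'n \<Rightarrow> real. \<forall>j. linear (g j) \<and> (\<forall>x\<in>?A. g j x = (if x = a j then 1 else 0))"
    by (rule choice)
  then obtain g :: "nat \<Rightarrow> real^'n \<Rightarrow> real" where g0: "\<forall>j. linear (g j) \<and> (\<forall>x\<in>?A. g j x = (if x = a j then 1 else 0))"
    by blast
  have g: "\<And>j. linear (g j)" "\<And>j x. x \<in> ?A \<Longrightarrow> g j x = (if x = a j then 1 else 0)"
    using g0 by blast+
  show ?thesis
  proof (intro exI[of _ g] conjI allI impI)
    fix j show "linear (g j)" by (rule g(1))
  next
    fix i j assume "i < k" "j < k"
    then have "g j (a i) = (if a i = a j then 1 else 0)" using g(2)[of "a i" j] by auto
    moreover have "(a i = a j) = (i = j)" using inj \<open>i < k\<close> \<open>j < k\<close> by (auto simp: inj_on_eq_iff)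
    ultimately show "g j (a i) = (if i = j then 1 else 0)" by simp
  qed
qed



lemma cross_zero:
  fixes w a b :: "nat \<Rightarrow> real"
  assumes w: "\<And>i. i < m \<Longrightarrow> 0 \<le> w i"
    and mn: "\<And>t. (\<Sum>i<m. w i * (a i)\<^sup>2) \<le> (\<Sum>i<m. w i * (a i - t * b i)\<^sup>2)"
  shows "(\<Sum>i<m. w i * a i * b i) = 0"
proof -
  define X where "X = (\<Sum>i<m. w i * a i * b i)"
  define D where "D = (\<Sum>i<m. w i * (b i)\<^sup>2)"
  have D0: "0 \<le> D" unfolding D_def using w by (intro sum_nonneg) auto
  have ex: "(\<Sum>i<m. w i * (a i - t * b i)\<^sup>2) = (\<Sum>i<m. w i * (a i)\<^sup>2) - 2 * t * X + t\<^sup>2 * D" for t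
  proof -
    have "w i * (a i - t * b i)\<^sup>2 = w i * (a i)\<^sup>2 - 2 * t * (w i * a i * b i) + t\<^sup>2 * (w i * (b i)\<^sup>2)" for i
      by (simp add: power2_eq_square algebra_simps)
    then have "(\<Sum>i<m. w i * (a i - t * b i)\<^sup>2) = (\<Sum>i<m. w i * (a i)\<^sup>2 - 2 * t * (w i * a i * b i) + t\<^sup>2 * (w i * (b i)\<^sup>2))"
      by simp
    also have "\<dots> = (\<Sum>i<m. w i * (a i)\<^sup>2) - 2 * t * X + t\<^sup>2 * D"
      by (simp add: sum.distrib sum_subtractf sum_distrib_left X_def D_def)
    finally show ?thesis .
  qed
  have key: "0 \<le> t\<^sup>2 * D - 2 * t * X" for t using mn[of t] unfolding ex by linarith
  define t where "t = X / (D + 1)"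
  have "0 \<le> t\<^sup>2 * D - 2 * t * X" by (rule key)
  then have "0 \<le> (D + 1)\<^sup>2 * (t\<^sup>2 * D - 2 * t * X)" by simp
  also have "(D + 1)\<^sup>2 * (t\<^sup>2 * D - 2 * t * X) = X\<^sup>2 * D - 2 * X\<^sup>2 * (D + 1)"
  proof -
    have tD: "t * (D + 1) = X" using D0 unfolding t_def by simp
    have "(D + 1)\<^sup>2 * (t\<^sup>2 * D - 2 * t * X) = (t * (D + 1))\<^sup>2 * D - 2 * (t * (D + 1)) * (D + 1) * X"
      by (simp add: power2_eq_square algebra_simps)
    then show ?thesis unfolding tD by (simp add: power2_eq_square algebra_simps)
  qed
  finally have "X\<^sup>2 * (D + 2) \<le> 0" by (simp add: algebra_simps)
  moreover have "0 < D + 2" using D0 by simp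
  ultimately have "X\<^sup>2 \<le> 0" by (simp add: mult_le_0_iff)
  then show ?thesis unfolding X_def[symmetric] by simp
qed

lemma lsq_max_bound:
  fixes w b c :: "nat \<Rightarrow> real"
  assumes m: "0 < m" and w: "\<And>i. i < m \<Longrightarrow> 0 < w i"
    and bc: "(\<Sum>i<m. w i * (b i)\<^sup>2) \<le> (\<Sum>i<m. w i * (c i)\<^sup>2)"
    and cN: "\<And>i. i < m \<Longrightarrow> \<bar>c i\<bar> \<le> N"
  shows "Max ((\<lambda>i. \<bar>b i\<bar>) ` {..<m}) \<le> N * sqrt (\<Sum>i<m. w i / Min (w ` {..<m}))"
proof -
  define mw where "mw = Min (w ` {..<m})"
  have ne: "{..<m} \<noteq> {}" using m by auto
  have mw0: "0 < mw" unfolding mw_def using ne w by (subst Min_gr_iff) auto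
  have mwle: "mw \<le> w i" if "i < m" for i unfolding mw_def using that by (intro Min_le) auto
  have N0: "0 \<le> N" using cN[of 0] m by linarith
  have sc: "(\<Sum>i<m. w i * (c i)\<^sup>2) \<le> N\<^sup>2 * (\<Sum>i<m. w i)"
  proof -
    have "(\<Sum>i<m. w i * (c i)\<^sup>2) \<le> (\<Sum>i<m. w i * N\<^sup>2)"
    proof (rule sum_mono)
      fix i assume "i \<in> {..<m}"
      then have "(c i)\<^sup>2 \<le> N\<^sup>2" using cN[of i] by (metis abs_ge_zero power2_abs power_mono lessThan_iff)
      then show "w i * (c i)\<^sup>2 \<le> w i * N\<^sup>2" using w[of i] \<open>i \<in> {..<m}\<close> by (intro mult_left_mono) auto
    qed
    also have "(\<Sum>i<m. w i * N\<^sup>2) = N\<^sup>2 * (\<Sum>i<m. w i)" by (simp add: sum_distrib_right mult.commute)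
    finally show ?thesis .
  qed
  show ?thesis unfolding mw_def[symmetric]
  proof (subst Max_le_iff, simp, use ne in simp, intro ballI)
    fix y assume "y \<in> (\<lambda>i. \<bar>b i\<bar>) ` {..<m}"
    then obtain i where i: "i < m" "y = \<bar>b i\<bar>" by auto
    have "mw * (b i)\<^sup>2 \<le> w i * (b i)\<^sup>2" using mwle[OF i(1)] by (intro mult_right_mono) auto
    also have "\<dots> \<le> (\<Sum>j<m. w j * (b j)\<^sup>2)"
    proof (rule member_le_sum)
      fix j assume "j \<in> {..<m} - {i}"
      then have "0 \<le> w j" using w[of j] by simp
      then show "0 \<le> w j * (b j)\<^sup>2" by simp
    qed (use i in auto)
    also have "\<dots> \<le> N\<^sup>2 * (\<Sum>j<m. w j)" using bc sc by linarith
    finally have "(b i)\<^sup>2 \<le> N\<^sup>2 * ((\<Sum>j<m. w j) / mw)"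
      using mw0 by (simp add: field_simps)
    then have "sqrt ((b i)\<^sup>2) \<le> sqrt (N\<^sup>2 * ((\<Sum>j<m. w j) / mw))" by (rule real_sqrt_le_mono)
    also have "sqrt (N\<^sup>2 * ((\<Sum>j<m. w j) / mw)) = N * sqrt ((\<Sum>j<m. w j) / mw)"
      using N0 by (simp only: real_sqrt_mult real_sqrt_abs abs_of_nonneg)
    also have "(\<Sum>j<m. w j) / mw = (\<Sum>j<m. w j / mw)" by (simp add: sum_divide_distrib)
    finally show "y \<le> N * sqrt (\<Sum>i<m. w i / mw)" using i by simp
  qed
qed



lemma avg_diff:
  fixes f g :: "'n::finite kform"
  assumes "compact E" "MSP k TYPE('n)" "dform k E f" "dform k E g" "oriented_rect k E S u"
  shows "avg_current k S u (f - g) = avg_current k S u f - avg_current k S u g"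
  unfolding form_minus[of f g] avg_comb[OF assms] by simp

lemma dform_diff: "dform k E f \<Longrightarrow> dform k E g \<Longrightarrow> dform k E (f - g)"
  unfolding form_minus by (rule dform_comb)

lemma pform_diff: "pform r k f \<Longrightarrow> pform r k g \<Longrightarrow> pform r k (f - g)"
  unfolding form_minus by (rule pform_comb)

lemma avg_le_norm0:
  fixes f :: "'n::finite kform"
  assumes "compact E" "MSP k TYPE('n)" "dform k E f" "oriented_rect k E S u"
  shows "\<bar>avg_current k S u f\<bar> \<le> norm0 k E f"
proof -
  from form_int[OF assms(1,3,2)] obtain B where
    "\<forall>S u. oriented_rect k E S u \<longrightarrow> set_integrable (hausdorff_measure k) S (\<lambda>x. f x (u x)) \<and> \<bar>avg_current k S u f\<bar> \<le> B"
    by blast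
  then have "\<exists>B. \<forall>S u. oriented_rect k E S u \<longrightarrow> \<bar>avg_current k S u f\<bar> \<le> B" by blast
  then show ?thesis using assms(4) by (rule norm0_upper)
qed

lemma lsq_shift:
  fixes \<omega> p \<theta> :: "'n::finite kform"
  assumes lsq: "is_lsq r k T m w \<omega> p" and th: "pform r k \<theta>"
  shows "is_lsq r k T m w (\<omega> - \<theta>) (p - \<theta>)"
  unfolding is_lsq_def
proof (intro conjI allI impI)
  have pp: "pform r k p" using lsq by (simp add: is_lsq_def)
  then show "pform r k (p - \<theta>)" using th by (rule pform_diff)
  fix \<theta>' :: "'n kform" assume th': "pform r k \<theta>'"
  have e1: "(\<omega> - \<theta>) - (p - \<theta>) = \<omega> - p" by (simp add: fun_eq_iff)
  have e2: "(\<omega> - \<theta>) - \<theta>' = \<omega> - (\<lambda>x v. 1 * \<theta> x v + 1 * \<theta>' x v)" by (simp add: fun_eq_iff)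
  have "pform r k (\<lambda>x v. 1 * \<theta> x v + 1 * \<theta>' x v)" using th th' by (rule pform_comb)
  then show "(\<Sum>i<m. w i * (avg_current k (fst (T i)) (snd (T i)) (\<omega> - \<theta> - (p - \<theta>)))\<^sup>2)
         \<le> (\<Sum>i<m. w i * (avg_current k (fst (T i)) (snd (T i)) (\<omega> - \<theta> - \<theta>'))\<^sup>2)"
    unfolding e1 e2 using lsq by (simp add: is_lsq_def)
qed

lemma C_pos:
  fixes E :: "(real^'n::finite) set"
  assumes E: "compact E" and ms: "MSP k TYPE('n)" and adm: "admissible_mesh k E T M C"
  shows "0 < C"
proof -
  let ?M = "hausdorff_measure k :: (real^'n) measure"
  have M0: "0 < M 0" and mc: "\<And>i. i < M 0 \<Longrightarrow> mesh_current k E (fst (T 0 i)) (snd (T 0 i))"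
    and ad: "\<And>\<theta>. pform 0 k \<theta> \<Longrightarrow>
        norm0 k E \<theta> \<le> C * Max ((\<lambda>i. \<bar>avg_current k (fst (T 0 i)) (snd (T 0 i)) \<theta>\<bar>) ` {..<M 0})"
    using adm unfolding admissible_mesh_def by auto
  define S where "S = fst (T 0 0)"
  define u where "u = snd (T 0 0)"
  have mc0: "mesh_current k E S u" using mc[OF M0] by (simp add: S_def u_def)
  then have or: "oriented_rect k E S u" by (simp add: mesh_current_def)
  from mc0 obtain x0 a \<Omega> where dima: "dim (a ` {..<k}) = k"
    and pos: "\<forall>x\<in>S. \<exists>c>0. \<forall>\<phi>. is_covector k \<phi> \<longrightarrow> \<phi> (u x) = c * \<phi> a"
    unfolding mesh_current_def by blast
  from dual_exists[OF dima] obtain g :: "nat \<Rightarrow> real^'n \<Rightarrow> real" where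
    g: "\<forall>j. linear (g j)" "\<forall>i<k. \<forall>j<k. g j (a i) = (if i = j then 1 else 0)" by blast
  define \<phi>0 where "\<phi>0 = lf k g"
  have cov: "is_covector k \<phi>0" unfolding \<phi>0_def using g(1) by (intro lf_covector) auto
  have pa: "\<phi>0 a = 1" unfolding \<phi>0_def using g(2) by (intro lf_dual) auto
  define \<theta> where "\<theta> = (\<lambda>x::real^'n. \<phi>0)"
  have pth: "pform 0 k \<theta>" unfolding pform_def \<theta>_def using cov by (simp add: poly_fun_const)
  have dth: "dform k E \<theta>" using pth by (rule pform_dform)
  have phipos: "0 < \<phi>0 (u x)" if "x \<in> S" for x
  proof -
    from pos that obtain c where "c > 0" "\<phi>0 (u x) = c * \<phi>0 a" using cov by blast
    then show ?thesis using pa by simp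
  qed
  have Sm: "S \<in> sets ?M" and Hpos: "0 < hausdorff_outer k S"
    using or by (auto simp: oriented_rect_def hk_in_sets)
  have emS: "emeasure ?M S = hausdorff_outer k S"
    using or ms by (intro emeasure_HM) (auto simp: oriented_rect_def)
  have Hfin: "hausdorff_outer k S < \<infinity>" using or by (simp add: oriented_rect_def)
  have si: "set_integrable ?M S (\<lambda>x. \<theta> x (u x))" using form_int[OF E dth ms] or by blast
  define F where "F x = indicator S x * \<phi>0 (u x)" for x
  have Fint: "integrable ?M F" using si unfolding set_integrable_def F_def \<theta>_def by simp
  have F0: "0 \<le> F x" for x unfolding F_def using phipos by (cases "x \<in> S") (auto intro: less_imp_le)
  have Ipos: "0 < integral\<^sup>L ?M F"
  proof -
    have "integral\<^sup>L ?M F \<noteq> 0"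
    proof
      assume "integral\<^sup>L ?M F = 0"
      then have "AE x in ?M. F x = 0" using integral_nonneg_eq_0_iff_AE[OF Fint] F0 by simp
      then have "AE x in ?M. x \<notin> S"
        by (rule AE_mp) (auto intro!: AE_I2 simp: F_def dest: phipos)
      then have "S \<in> null_sets ?M" using AE_iff_null_sets[OF Sm] by simp
      then show False using emS Hpos by (simp add: null_sets_def)
    qed
    moreover have "0 \<le> integral\<^sup>L ?M F" using F0 by (intro integral_nonneg_AE) auto
    ultimately show ?thesis by simp
  qed
  have hp: "0 < enn2real (hausdorff_outer k S)"
    using Hpos Hfin by (simp add: enn2real_positive_iff)
  have Tpos: "0 < avg_current k S u \<theta>"
  proof -
    have "avg_current k S u \<theta> = integral\<^sup>L ?M F / enn2real (hausdorff_outer k S)"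
      unfolding avg_current_def set_lebesgue_integral_def F_def \<theta>_def by simp
    then show ?thesis using Ipos hp by simp
  qed
  let ?A = "(\<lambda>i. \<bar>avg_current k (fst (T 0 i)) (snd (T 0 i)) \<theta>\<bar>) ` {..<M 0}"
  have finA: "finite ?A" and neA: "?A \<noteq> {}" using M0 by auto
  have "\<bar>avg_current k S u \<theta>\<bar> \<in> ?A" using M0 unfolding S_def u_def by auto
  then have "\<bar>avg_current k S u \<theta>\<bar> \<le> Max ?A" using finA by (rule Max_ge[rotated])
  then have Mpos: "0 < Max ?A" using Tpos by simp
  have "Max ?A \<le> norm0 k E \<theta>"
  proof (subst Max_le_iff[OF finA neA], intro ballI)
    fix y assume "y \<in> ?A"
    then obtain i where "i < M 0" "y = \<bar>avg_current k (fst (T 0 i)) (snd (T 0 i)) \<theta>\<bar>" by auto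
    moreover have "oriented_rect k E (fst (T 0 i)) (snd (T 0 i))"
      using mc[OF \<open>i < M 0\<close>] by (simp add: mesh_current_def)
    ultimately show "y \<le> norm0 k E \<theta>" using avg_le_norm0[OF E ms dth] by simp
  qed
  also have "norm0 k E \<theta> \<le> C * Max ?A" by (rule ad[OF pth])
  finally have "Max ?A \<le> C * Max ?A" .
  then have "1 * Max ?A \<le> C * Max ?A" by simp
  then have "1 \<le> C" using Mpos by (simp only: mult_le_cancel_right_pos)
  then show ?thesis by simp
qed



lemma GB:
  fixes E :: "(real^'n::finite) set" and \<omega> p :: "'n kform"
  assumes E: "compact E" and ms: "MSP k TYPE('n)" and adm: "admissible_mesh k E T M C"
    and C0: "0 \<le> C" and w: "\<forall>i<M r. 0 < w r i"
    and om: "dform k E \<omega>" and lsq: "is_lsq r k (T r) (M r) (w r) \<omega> p"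
  shows "norm0 k E p \<le> C * sqrt (\<Sum>i<M r. w r i / Min (w r ` {..<M r})) * norm0 k E \<omega>"
proof -
  define Ti where "Ti i f = avg_current k (fst (T r i)) (snd (T r i)) f" for i f
  have m0: "0 < M r" and or: "\<And>i. i < M r \<Longrightarrow> oriented_rect k E (fst (T r i)) (snd (T r i))"
    and ad: "\<And>\<theta>. pform r k \<theta> \<Longrightarrow> norm0 k E \<theta> \<le> C * Max ((\<lambda>i. \<bar>Ti i \<theta>\<bar>) ` {..<M r})"
    using adm unfolding admissible_mesh_def mesh_current_def Ti_def by auto
  have pp: "pform r k p" using lsq by (simp add: is_lsq_def)
  have dp: "dform k E p" using pp by (rule pform_dform)
  have lsqi: "\<And>\<theta>. pform r k \<theta> \<Longrightarrow> (\<Sum>i<M r. w r i * (Ti i (\<omega> - p))\<^sup>2) \<le> (\<Sum>i<M r. w r i * (Ti i (\<omega> - \<theta>))\<^sup>2)"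
    using lsq unfolding is_lsq_def Ti_def by blast
  define a where "a i = Ti i (\<omega> - p)" for i
  define b where "b i = Ti i p" for i
  define c where "c i = Ti i \<omega>" for i
  have cab: "c i = a i + b i" if "i < M r" for i
    using avg_diff[OF E ms om dp or[OF that]] unfolding a_def b_def c_def Ti_def by simp
  have mn: "(\<Sum>i<M r. w r i * (a i)\<^sup>2) \<le> (\<Sum>i<M r. w r i * (a i - t * b i)\<^sup>2)" for t
  proof -
    define \<theta> where "\<theta> = (\<lambda>x v. 1 * p x v + t * p x v)"
    have pth: "pform r k \<theta>" unfolding \<theta>_def using pp pp by (rule pform_comb)
    have dth: "dform k E \<theta>" using pth by (rule pform_dform)
    have "Ti i (\<omega> - \<theta>) = a i - t * b i" if "i < M r" for i
    proof -
      have "Ti i (\<omega> - \<theta>) = c i - Ti i \<theta>"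
        using avg_diff[OF E ms om dth or[OF that]] unfolding c_def Ti_def by simp
      also have "Ti i \<theta> = 1 * b i + t * b i"
        unfolding Ti_def \<theta>_def b_def by (rule avg_comb[OF E ms dp dp or[OF that]])
      finally have "Ti i (\<omega> - \<theta>) = c i - (1 * b i + t * b i)" .
      then show ?thesis using cab[OF that] by linarith
    qed
    then have "(\<Sum>i<M r. w r i * (Ti i (\<omega> - \<theta>))\<^sup>2) = (\<Sum>i<M r. w r i * (a i - t * b i)\<^sup>2)"
      by (intro sum.cong) auto
    then show ?thesis using lsqi[OF pth] unfolding a_def by simp
  qed
  have cz: "(\<Sum>i<M r. w r i * a i * b i) = 0"
    by (rule cross_zero[OF _ mn]) (use w in \<open>auto intro: less_imp_le\<close>)
  have bc: "(\<Sum>i<M r. w r i * (b i)\<^sup>2) \<le> (\<Sum>i<M r. w r i * (c i)\<^sup>2)"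
  proof -
    have "(\<Sum>i<M r. w r i * (c i)\<^sup>2) = (\<Sum>i<M r. w r i * (a i)\<^sup>2 + 2 * (w r i * a i * b i) + w r i * (b i)\<^sup>2)"
      by (intro sum.cong) (auto simp: cab power2_eq_square algebra_simps)
    also have "\<dots> = (\<Sum>i<M r. w r i * (a i)\<^sup>2) + 2 * (\<Sum>i<M r. w r i * a i * b i) + (\<Sum>i<M r. w r i * (b i)\<^sup>2)"
      by (simp add: sum.distrib sum_distrib_left)
    also have "\<dots> = (\<Sum>i<M r. w r i * (a i)\<^sup>2) + (\<Sum>i<M r. w r i * (b i)\<^sup>2)" using cz by simp
    also have "\<dots> \<ge> (\<Sum>i<M r. w r i * (b i)\<^sup>2)"
    proof -
      have "0 \<le> (\<Sum>i<M r. w r i * (a i)\<^sup>2)"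
      proof (rule sum_nonneg)
        fix i assume "i \<in> {..<M r}"
        then have "0 \<le> w r i" using w by (simp add: less_imp_le)
        then show "0 \<le> w r i * (a i)\<^sup>2" by simp
      qed
      then show ?thesis by linarith
    qed
    finally show ?thesis .
  qed
  have cN: "\<bar>c i\<bar> \<le> norm0 k E \<omega>" if "i < M r" for i
    unfolding c_def Ti_def by (rule avg_le_norm0[OF E ms om or[OF that]])
  have mb: "Max ((\<lambda>i. \<bar>b i\<bar>) ` {..<M r}) \<le> norm0 k E \<omega> * sqrt (\<Sum>i<M r. w r i / Min (w r ` {..<M r}))"
    by (rule lsq_max_bound[OF m0 _ bc cN]) (use w in auto)
  have "norm0 k E p \<le> C * Max ((\<lambda>i. \<bar>b i\<bar>) ` {..<M r})" using ad[OF pp] unfolding b_def .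
  also have "\<dots> \<le> C * (norm0 k E \<omega> * sqrt (\<Sum>i<M r. w r i / Min (w r ` {..<M r})))"
    using mb C0 by (rule mult_left_mono)
  finally show ?thesis by (simp add: ac_simps)
qed

theorem mainTheorem17:
  fixes E :: "(real^'n) set" and k :: nat and C :: real
    and T :: "nat \<Rightarrow> nat \<Rightarrow> (real^'n) set \<times> (real^'n \<Rightarrow> nat \<Rightarrow> real^'n)"
    and M :: "nat \<Rightarrow> nat" and w :: "nat \<Rightarrow> nat \<Rightarrow> real"
  assumes "compact E" and "interior E \<noteq> {}"
    and "admissible_mesh k E T M C"
    and "\<forall>r. \<forall>i<M r. 0 < w r i"
  shows "\<forall>r. let K = C * sqrt (\<Sum>i<M r. w r i / Min (w r ` {..<M r})) * real (pdim CARD('n) k r) in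
           (\<forall>\<omega> p. dform k E \<omega> \<and> norm0 k E \<omega> = 1 \<and> is_lsq r k (T r) (M r) (w r) \<omega> p
                \<longrightarrow> norm0 k E p \<le> K) \<and>
           (\<forall>\<omega> p. dform k E \<omega> \<and> is_lsq r k (T r) (M r) (w r) \<omega> p
                \<longrightarrow> norm0 k E (\<omega> - p) \<le> (1 + K) * dist_poly r k E \<omega>)"
proof (intro allI)
  fix r
  note E = assms(1) and adm = assms(3) and wpos = assms(4)
  define K0 where "K0 = C * sqrt (\<Sum>i<M r. w r i / Min (w r ` {..<M r}))"
  define K where "K = K0 * real (pdim CARD('n) k r)"
  have M00: "0 < M 0" and mc: "mesh_current k E (fst (T 0 0)) (snd (T 0 0))"
    using adm unfolding admissible_mesh_def by auto
  define S0 where "S0 = fst (T 0 0)"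
  define u0 where "u0 = snd (T 0 0)"
  have or0: "oriented_rect k E S0 u0" using mc by (simp add: mesh_current_def S0_def u0_def)
  have pz: "pform r k (\<lambda>x v. 0)" by (rule pform_zero)
  have main: "(\<forall>\<omega> p. dform k E \<omega> \<and> norm0 k E \<omega> = 1 \<and> is_lsq r k (T r) (M r) (w r) \<omega> p
                \<longrightarrow> norm0 k E p \<le> K) \<and>
           (\<forall>\<omega> p. dform k E \<omega> \<and> is_lsq r k (T r) (M r) (w r) \<omega> p
                \<longrightarrow> norm0 k E (\<omega> - p) \<le> (1 + K) * dist_poly r k E \<omega>)"
  proof (cases "MSP k TYPE('n)")
    case False
    have N0: "norm0 k E f = 0" for f :: "'n kform"
      using or0 avg_zero_nonMS[OF False] by (rule norm0_const0)
    have "{norm0 k E (\<omega> - \<theta>) | \<theta>. pform r k \<theta>} = {0}" for \<omega> :: "'n kform"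
      using pz by (auto simp: N0)
    then have D0: "dist_poly r k E \<omega> = 0" for \<omega> :: "'n kform"
      unfolding dist_poly_def by simp
    show ?thesis by (simp add: N0 D0)
  next
    case ms: True
    have C0: "0 < C" by (rule C_pos[OF E ms adm])
    obtain a :: "nat \<Rightarrow> real^'n" where dima: "dim (a ` {..<k}) = (k::nat)"
      using mc unfolding mesh_current_def by blast
    have kle: "k \<le> CARD('n)" using dim_subset_UNIV_cart[of "a ` {..<k}"] dima by simp
    have pd: "1 \<le> pdim CARD('n) k r"
    proof -
      have "0 < CARD('n) choose k" using kle by (simp add: zero_less_binomial)
      moreover have "0 < (CARD('n) + r) choose r" by (simp add: zero_less_binomial)
      ultimately show ?thesis unfolding pdim_def by (simp add: Suc_le_eq)
    qed
    have Mr: "0 < M r" using adm unfolding admissible_mesh_def by auto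
    have minpos: "0 < Min (w r ` {..<M r})" using Mr wpos by (subst Min_gr_iff) auto
    have "0 \<le> (\<Sum>i<M r. w r i / Min (w r ` {..<M r}))"
    proof (rule sum_nonneg)
      fix i assume "i \<in> {..<M r}"
      then have "0 \<le> w r i" using wpos by (simp add: less_imp_le)
      then show "0 \<le> w r i / Min (w r ` {..<M r})" using minpos by simp
    qed
    then have K00: "0 \<le> K0" unfolding K0_def using C0 by simp
    have K0K: "K0 \<le> K" unfolding K_def using K00 pd
      by (metis mult.right_neutral mult_left_mono of_nat_1 of_nat_le_iff)
    have K0': "0 \<le> K" using K00 K0K by linarith
    have gb: "norm0 k E q \<le> K0 * norm0 k E \<omega>"
      if "dform k E \<omega>" "is_lsq r k (T r) (M r) (w r) \<omega> q" for \<omega> q :: "'n kform"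
    proof -
      have wr: "\<forall>i<M r. 0 < w r i" using wpos by blast
      show ?thesis using GB[where r = r and w = w, OF E ms adm less_imp_le[OF C0] wr that] unfolding K0_def by simp
    qed
    have N0: "0 \<le> norm0 k E f" if "dform k E f" for f :: "'n kform"
      using avg_le_norm0[OF E ms that or0] by linarith
    show ?thesis
    proof (intro conjI allI impI)
      fix \<omega> p :: "'n kform"
      assume h: "dform k E \<omega> \<and> norm0 k E \<omega> = 1 \<and> is_lsq r k (T r) (M r) (w r) \<omega> p"
      then have "norm0 k E p \<le> K0 * norm0 k E \<omega>" using gb by blast
      then show "norm0 k E p \<le> K" using h K0K by simp
    next
      fix \<omega> p :: "'n kform"
      assume h: "dform k E \<omega> \<and> is_lsq r k (T r) (M r) (w r) \<omega> p"
      then have om: "dform k E \<omega>" and lsq: "is_lsq r k (T r) (M r) (w r) \<omega> p" by auto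
      have pp: "pform r k p" using lsq by (simp add: is_lsq_def)
      have dp: "dform k E p" using pp by (rule pform_dform)
      have each: "norm0 k E (\<omega> - p) \<le> (1 + K) * norm0 k E (\<omega> - \<theta>)" if th: "pform r k \<theta>" for \<theta>
      proof -
        have dth: "dform k E \<theta>" using th by (rule pform_dform)
        have d1: "dform k E (\<omega> - \<theta>)" using om dth by (rule dform_diff)
        have d2: "dform k E (p - \<theta>)" using dp dth by (rule dform_diff)
        have d3: "dform k E (\<omega> - p)" using om dp by (rule dform_diff)
        have "norm0 k E (p - \<theta>) \<le> K0 * norm0 k E (\<omega> - \<theta>)"
          by (rule gb[OF d1 lsq_shift[OF lsq th]])
        also have "\<dots> \<le> K * norm0 k E (\<omega> - \<theta>)"
          using K0K N0[OF d1] by (rule mult_right_mono)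
        finally have np: "norm0 k E (p - \<theta>) \<le> K * norm0 k E (\<omega> - \<theta>)" .
        have "norm0 k E (\<omega> - p) \<le> norm0 k E (\<omega> - \<theta>) + norm0 k E (p - \<theta>)"
        proof (rule norm0_least[OF or0])
          fix S u assume or: "oriented_rect k E S u"
          have "avg_current k S u (\<omega> - p) = avg_current k S u (\<omega> - \<theta>) - avg_current k S u (p - \<theta>)"
            using avg_diff[OF E ms om dp or] avg_diff[OF E ms om dth or] avg_diff[OF E ms dp dth or]
            by simp
          then have "\<bar>avg_current k S u (\<omega> - p)\<bar> \<le> \<bar>avg_current k S u (\<omega> - \<theta>)\<bar> + \<bar>avg_current k S u (p - \<theta>)\<bar>"
            by simp
          also have "\<dots> \<le> norm0 k E (\<omega> - \<theta>) + norm0 k E (p - \<theta>)"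
            by (intro add_mono avg_le_norm0[OF E ms _ or] d1 d2)
          finally show "\<bar>avg_current k S u (\<omega> - p)\<bar> \<le> norm0 k E (\<omega> - \<theta>) + norm0 k E (p - \<theta>)" .
        qed
        also have "\<dots> \<le> (1 + K) * norm0 k E (\<omega> - \<theta>)" using np by (simp add: algebra_simps)
        finally show ?thesis .
      qed
      have "norm0 k E (\<omega> - p) / (1 + K) \<le> dist_poly r k E \<omega>"
        unfolding dist_poly_def
      proof (rule cInf_greatest)
        show "{norm0 k E (\<omega> - \<theta>) | \<theta>. pform r k \<theta>} \<noteq> {}" using pz by blast
        fix x assume "x \<in> {norm0 k E (\<omega> - \<theta>) | \<theta>. pform r k \<theta>}"
        then obtain \<theta> where "pform r k \<theta>" "x = norm0 k E (\<omega> - \<theta>)" by blast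
        then show "norm0 k E (\<omega> - p) / (1 + K) \<le> x"
          using each K0' by (simp add: divide_le_eq mult.commute)
      qed
      then show "norm0 k E (\<omega> - p) \<le> (1 + K) * dist_poly r k E \<omega>"
        using K0' by (simp add: divide_le_eq mult.commute)
    qed
  qed
  show "let K = C * sqrt (\<Sum>i<M r. w r i / Min (w r ` {..<M r})) * real (pdim CARD('n) k r) in
           (\<forall>\<omega> p. dform k E \<omega> \<and> norm0 k E \<omega> = 1 \<and> is_lsq r k (T r) (M r) (w r) \<omega> p
                \<longrightarrow> norm0 k E p \<le> K) \<and>
           (\<forall>\<omega> p. dform k E \<omega> \<and> is_lsq r k (T r) (M r) (w r) \<omega> p
                \<longrightarrow> norm0 k E (\<omega> - p) \<le> (1 + K) * dist_poly r k E \<omega>)"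
    using main unfolding Let_def K_def K0_def .
qed

end
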